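(* Let $A$ be a sesquiad and $A^{\mathrm{red}}=A/\operatorname{Nil}(A)$. Then $A^{\mathrm{red}}$ is reduced, it is the largest reduced quotient of $A$ (by a congruence), and the projection $A\to A^{\mathrm{red}}$ induces a homeomorphism $\operatorname{spec}_cA^{\mathrm{red}}\to\operatorname{spec}_cA$.
   Context: Monoids are commutative with $1$ and a zero $0$. A sesquiad is a monoid $A$ with an addition: partially defined sums $\sum_jk_ja_j$ coming from an injective monoid morphism $\varphi:A\to R$ into a commutative ring with $\varphi(0)=0$, defined exactly when $\sum_jk_j\varphi(a_j)\in\varphi(A)$. A congruence is an equivalence relation $\mathcal C$ on $A$ such that $A/\mathcal C$ admits an addition making $A\to A/\mathcal C$ a sesquiad morphism; the quotient $A/\mathcal C$ carries the minimal such addition (the one defined by $A/\mathcal C\hookrightarrow R_A/J$, $J$ the ideal of the universal ring $R_A$ generated by $a-b$, $a\sim_{\mathcal C}b$). A congruence is prime if $A/\mathcal C$ is integral ($1\not\sim 0$; $af\sim bf\Rightarrow a\sim b$ or $f\sim0$). $\operatorname{spec}_cA$ is the set of prime congruences with topology generated by $D(a,b)=\{\mathcal C:(a,b)\notin\mathcal C\}$. A sesquiad morphism $\varphi:A\to B$ induces $\varphi^*:\operatorname{spec}_cB\to\operatorname{spec}_cA$, $E\mapsto\{(a,a'):\varphi(a)\sim_E\varphi(a')\}$. $\operatorname{Nil}(A)=\bigcap_{E\in\operatorname{spec}_cA}E$, and $A$ is reduced if $\operatorname{Nil}(A)$ is the diagonal $\Delta$. *)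

theory Defs
  imports "HOL-Analysis.Abstract_Topology" "HOL-Algebra.Ideal"
begin

text \<open>A sesquiad: a commutative monoid with 1 and an absorbing 0 on a carrier set,
  together with its partial addition, recorded as the relation
  S_sum k a  meaning  "the formal sum  sum_x k(x) x  is defined and equals a",
  where k is a finitely supported integer coefficient function on the carrier.\<close>

record 'a sesquiad =
  S_carrier :: "'a set"
  S_mult :: "'a \<Rightarrow> 'a \<Rightarrow> 'a"
  S_one :: "'a"
  S_zero :: "'a"
  S_sum :: "('a \<Rightarrow> int) \<Rightarrow> 'a \<Rightarrow> bool"

definition fin_comb :: "'a set \<Rightarrow> ('a \<Rightarrow> int) \<Rightarrow> bool" where
  "fin_comb A k \<longleftrightarrow> finite {x. k x \<noteq> 0} \<and> {x. k x \<noteq> 0} \<subseteq> A"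

definition comm_monoid_zero :: "'a sesquiad \<Rightarrow> bool" where
  "comm_monoid_zero S \<longleftrightarrow>
     S_one S \<in> S_carrier S \<and> S_zero S \<in> S_carrier S \<and>
     (\<forall>x\<in>S_carrier S. \<forall>y\<in>S_carrier S. S_mult S x y \<in> S_carrier S) \<and>
     (\<forall>x\<in>S_carrier S. \<forall>y\<in>S_carrier S. \<forall>z\<in>S_carrier S.
        S_mult S (S_mult S x y) z = S_mult S x (S_mult S y z)) \<and>
     (\<forall>x\<in>S_carrier S. \<forall>y\<in>S_carrier S. S_mult S x y = S_mult S y x) \<and>
     (\<forall>x\<in>S_carrier S. S_mult S (S_one S) x = x) \<and>
     (\<forall>x\<in>S_carrier S. S_mult S (S_zero S) x = S_zero S)"

text \<open>The ring is taken with carrier type ('a => int) set; this is no loss of generality,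
  since the subring generated by phi(A) is a quotient of the monoid ring Z[A], whose
  elements are finitely supported functions 'a => int.\<close>

definition is_sesquiad :: "'a sesquiad \<Rightarrow> bool" where
  "is_sesquiad S \<longleftrightarrow> comm_monoid_zero S \<and>
     (\<exists>(R :: ('a \<Rightarrow> int) set ring) \<phi>. cring R \<and>
        \<phi> \<in> S_carrier S \<rightarrow> carrier R \<and> inj_on \<phi> (S_carrier S) \<and>
        \<phi> (S_one S) = \<one>\<^bsub>R\<^esub> \<and> \<phi> (S_zero S) = \<zero>\<^bsub>R\<^esub> \<and>
        (\<forall>x\<in>S_carrier S. \<forall>y\<in>S_carrier S. \<phi> (S_mult S x y) = \<phi> x \<otimes>\<^bsub>R\<^esub> \<phi> y) \<and>
        (\<forall>k a. S_sum S k a \<longleftrightarrow>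
           fin_comb (S_carrier S) k \<and> a \<in> S_carrier S \<and>
           finsum R (\<lambda>x. add_pow R (k x) (\<phi> x)) {x. k x \<noteq> 0} = \<phi> a))"

definition push_comb :: "('a \<Rightarrow> 'b) \<Rightarrow> ('a \<Rightarrow> int) \<Rightarrow> ('b \<Rightarrow> int)" where
  "push_comb f k = (\<lambda>y. \<Sum>x\<in>{x. k x \<noteq> 0 \<and> f x = y}. k x)"

definition sesq_hom :: "'a sesquiad \<Rightarrow> 'b sesquiad \<Rightarrow> ('a \<Rightarrow> 'b) \<Rightarrow> bool" where
  "sesq_hom S T f \<longleftrightarrow>
     f \<in> S_carrier S \<rightarrow> S_carrier T \<and>
     f (S_one S) = S_one T \<and> f (S_zero S) = S_zero T \<and>
     (\<forall>x\<in>S_carrier S. \<forall>y\<in>S_carrier S. f (S_mult S x y) = S_mult T (f x) (f y)) \<and>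
     (\<forall>k a. S_sum S k a \<longrightarrow> S_sum T (push_comb f k) (f a))"

definition basis_el :: "'a \<Rightarrow> ('a \<Rightarrow> int)" where
  "basis_el a = (\<lambda>z. if z = a then 1 else 0)"

definition monoid_ring :: "'a sesquiad \<Rightarrow> ('a \<Rightarrow> int) ring" where
  "monoid_ring S =
     \<lparr> carrier = {f. fin_comb (S_carrier S) f},
       mult = (\<lambda>f g z. \<Sum>(x, y)\<in>{(x, y). f x \<noteq> 0 \<and> g y \<noteq> 0 \<and> S_mult S x y = z}. f x * g y),
       one = basis_el (S_one S),
       zero = (\<lambda>_. 0),
       add = (\<lambda>f g z. f z + g z) \<rparr>"

text \<open>The universal ring R_A is Z[A] modulo the ideal generated by e_0 and the elements
  sum_x k(x) e_x - e_a for all defined sums  sum_x k(x) x = a.  For an equivalence C,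
  R_A/J (J generated by a - b, a ~ b) is Z[A] modulo the ideal below.\<close>
definition cong_ideal :: "'a sesquiad \<Rightarrow> ('a \<times> 'a) set \<Rightarrow> ('a \<Rightarrow> int) set" where
  "cong_ideal S C = genideal (monoid_ring S)
     ({basis_el (S_zero S)} \<union>
      {(\<lambda>z. k z - basis_el a z) | k a. S_sum S k a} \<union>
      {(\<lambda>z. basis_el a z - basis_el b z) | a b. (a, b) \<in> C})"

definition cls :: "('a \<times> 'a) set \<Rightarrow> 'a \<Rightarrow> 'a set" where
  "cls C a = C `` {a}"

definition quot_sum :: "'a sesquiad \<Rightarrow> ('a \<times> 'a) set \<Rightarrow> ('a set \<Rightarrow> int) \<Rightarrow> 'a set \<Rightarrow> bool" where
  "quot_sum S C \<kappa> Y \<longleftrightarrow>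
     fin_comb (S_carrier S // C) \<kappa> \<and> Y \<in> S_carrier S // C \<and>
     (\<exists>k a. fin_comb (S_carrier S) k \<and> a \<in> Y \<and> push_comb (cls C) k = \<kappa> \<and>
        (\<lambda>z. k z - basis_el a z) \<in> cong_ideal S C)"

text \<open>Monoid structure of A/C (well defined when C is a monoid congruence), with a given addition.\<close>
definition quot_with :: "'a sesquiad \<Rightarrow> ('a \<times> 'a) set \<Rightarrow> (('a set \<Rightarrow> int) \<Rightarrow> 'a set \<Rightarrow> bool)
    \<Rightarrow> 'a set sesquiad" where
  "quot_with S C \<sigma> =
     \<lparr> S_carrier = S_carrier S // C,
       S_mult = (\<lambda>X Y. cls C (S_mult S (SOME x. x \<in> X) (SOME y. y \<in> Y))),
       S_one = cls C (S_one S),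
       S_zero = cls C (S_zero S),
       S_sum = \<sigma> \<rparr>"

definition quot :: "'a sesquiad \<Rightarrow> ('a \<times> 'a) set \<Rightarrow> 'a set sesquiad" where
  "quot S C = quot_with S C (quot_sum S C)"

definition is_congruence :: "'a sesquiad \<Rightarrow> ('a \<times> 'a) set \<Rightarrow> bool" where
  "is_congruence S C \<longleftrightarrow> equiv (S_carrier S) C \<and>
     (\<forall>a b c. (a, b) \<in> C \<longrightarrow> c \<in> S_carrier S \<longrightarrow> (S_mult S a c, S_mult S b c) \<in> C) \<and>
     (\<exists>\<sigma>. is_sesquiad (quot_with S C \<sigma>) \<and> sesq_hom S (quot_with S C \<sigma>) (cls C))"

definition is_prime_congruence :: "'a sesquiad \<Rightarrow> ('a \<times> 'a) set \<Rightarrow> bool" where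
  "is_prime_congruence S C \<longleftrightarrow> is_congruence S C \<and>
     (S_one S, S_zero S) \<notin> C \<and>
     (\<forall>a\<in>S_carrier S. \<forall>b\<in>S_carrier S. \<forall>f\<in>S_carrier S.
        (S_mult S a f, S_mult S b f) \<in> C \<longrightarrow> (a, b) \<in> C \<or> (f, S_zero S) \<in> C)"

definition spec_c :: "'a sesquiad \<Rightarrow> ('a \<times> 'a) set set" where
  "spec_c S = {C. is_prime_congruence S C}"

definition D_open :: "'a sesquiad \<Rightarrow> 'a \<Rightarrow> 'a \<Rightarrow> ('a \<times> 'a) set set" where
  "D_open S a b = {C \<in> spec_c S. (a, b) \<notin> C}"

definition spec_top :: "'a sesquiad \<Rightarrow> ('a \<times> 'a) set topology" where
  "spec_top S = topology_generated_by
     (insert (spec_c S) {D_open S a b | a b. a \<in> S_carrier S \<and> b \<in> S_carrier S})"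

definition spec_map :: "'a sesquiad \<Rightarrow> ('a \<Rightarrow> 'b) \<Rightarrow> ('b \<times> 'b) set \<Rightarrow> ('a \<times> 'a) set" where
  "spec_map S \<phi> E = {(a, a'). a \<in> S_carrier S \<and> a' \<in> S_carrier S \<and> (\<phi> a, \<phi> a') \<in> E}"

definition Nil_cong :: "'a sesquiad \<Rightarrow> ('a \<times> 'a) set" where
  "Nil_cong S = (S_carrier S \<times> S_carrier S) \<inter> \<Inter> (spec_c S)"

definition reduced :: "'a sesquiad \<Rightarrow> bool" where
  "reduced S \<longleftrightarrow> Nil_cong S = Id_on (S_carrier S)"

definition red :: "'a sesquiad \<Rightarrow> 'a set sesquiad" where
  "red S = quot S (Nil_cong S)"

end

theory Submission
  imports Defs "HOL-Algebra.Weak_Morphisms"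
begin

definition supp :: "('a \<Rightarrow> int) \<Rightarrow> 'a set" where "supp f = {x. f x \<noteq> 0}"

lemma conv_eq:
  assumes A: "finite A" "supp f \<subseteq> A" and B: "finite B" "supp g \<subseteq> B"
  shows "(\<Sum>(x, y)\<in>{(x, y). f x \<noteq> 0 \<and> g y \<noteq> 0 \<and> m x y = z}. f x * g y)
       = (\<Sum>x\<in>A. \<Sum>y\<in>B. if m x y = z then f x * g y else 0)"
proof -
  let ?P = "{(x, y). f x \<noteq> 0 \<and> g y \<noteq> 0 \<and> m x y = z}"
  have sub: "?P \<subseteq> A \<times> B" using A B by (auto simp: supp_def)
  have "(\<Sum>x\<in>A. \<Sum>y\<in>B. if m x y = z then f x * g y else 0)
      = (\<Sum>(x,y)\<in>A \<times> B. if m x y = z then f x * g y else 0)"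
    by (simp add: sum.cartesian_product)
  also have "\<dots> = (\<Sum>(x,y)\<in>A \<times> B. if (x,y) \<in> ?P then f x * g y else 0)"
    by (rule sum.cong) auto
  also have "\<dots> = (\<Sum>(x,y)\<in>?P. f x * g y)"
  proof -
    have e: "A \<times> B \<inter> {p. f (fst p) \<noteq> 0 \<and> g (snd p) \<noteq> 0 \<and> m (fst p) (snd p) = z} = ?P"
      using sub by auto
    show ?thesis
      by (simp add: sum.If_cases[OF finite_cartesian_product[OF A(1) B(1)]] case_prod_beta e)
  qed
  finally show ?thesis by simp
qed

lemma mr_carrier: "f \<in> carrier (monoid_ring S) \<longleftrightarrow> finite (supp f) \<and> supp f \<subseteq> S_carrier S"
  by (simp add: monoid_ring_def fin_comb_def supp_def)

lemma mr_simps: "one (monoid_ring S) = basis_el (S_one S)" "zero (monoid_ring S) = (\<lambda>_. 0)"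
  "add (monoid_ring S) f g = (\<lambda>z. f z + g z)"
  by (simp_all add: monoid_ring_def)

lemma mr_mult:
  assumes "finite A" "supp f \<subseteq> A" "finite B" "supp g \<subseteq> B"
  shows "mult (monoid_ring S) f g z = (\<Sum>x\<in>A. \<Sum>y\<in>B. if S_mult S x y = z then f x * g y else 0)"
  using conv_eq[OF assms, of "S_mult S" z] by (simp add: monoid_ring_def)

lemma supp_mult_sub:
  assumes "finite A" "supp f \<subseteq> A" "finite B" "supp g \<subseteq> B"
  shows "supp (mult (monoid_ring S) f g) \<subseteq> (\<lambda>(x,y). S_mult S x y) ` (A \<times> B)"
proof
  fix z assume "z \<in> supp (mult (monoid_ring S) f g)"
  hence "(\<Sum>x\<in>A. \<Sum>y\<in>B. if S_mult S x y = z then f x * g y else 0) \<noteq> 0"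
    using mr_mult[OF assms] by (simp add: supp_def)
  then obtain x y where "x \<in> A" "y \<in> B" "S_mult S x y = z"
  proof -
    assume h: "(\<Sum>x\<in>A. \<Sum>y\<in>B. if S_mult S x y = z then f x * g y else 0) \<noteq> 0"
    obtain x where x: "x \<in> A" "(\<Sum>y\<in>B. if S_mult S x y = z then f x * g y else 0) \<noteq> 0"
      using sum.not_neutral_contains_not_neutral[OF h] by blast
    obtain y where y: "y \<in> B" "(if S_mult S x y = z then f x * g y else 0) \<noteq> 0"
      using sum.not_neutral_contains_not_neutral[OF x(2)] by blast
    from y have "S_mult S x y = z" by (auto split: if_splits)
    thus ?thesis using x y that by blast
  qed
  thus "z \<in> (\<lambda>(x,y). S_mult S x y) ` (A \<times> B)" by force
qed

lemma supp_basis: "supp (basis_el a) = {a}"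
  by (simp add: supp_def basis_el_def)

lemma collapse:
  fixes b :: "'u \<Rightarrow> 'x \<Rightarrow> 'y \<Rightarrow> int"
  assumes "finite U" "finite F" "finite G" "\<And>x y. x \<in> F \<Longrightarrow> y \<in> G \<Longrightarrow> p x y \<in> U"
  shows "(\<Sum>u\<in>U. \<Sum>x\<in>F. \<Sum>y\<in>G. if p x y = u then b u x y else 0) = (\<Sum>x\<in>F. \<Sum>y\<in>G. b (p x y) x y)"
proof -
  have "(\<Sum>u\<in>U. \<Sum>x\<in>F. \<Sum>y\<in>G. if p x y = u then b u x y else 0)
      = (\<Sum>x\<in>F. \<Sum>u\<in>U. \<Sum>y\<in>G. if p x y = u then b u x y else 0)"
    by (rule sum.swap)
  also have "\<dots> = (\<Sum>x\<in>F. \<Sum>y\<in>G. \<Sum>u\<in>U. if p x y = u then b u x y else 0)"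
    by (rule sum.cong[OF refl], rule sum.swap)
  also have "\<dots> = (\<Sum>x\<in>F. \<Sum>y\<in>G. b (p x y) x y)"
    using assms by (intro sum.cong refl) (simp add: sum.delta)
  finally show ?thesis .
qed

lemma if_prod_expand:
  fixes a :: "'x \<Rightarrow> 'y \<Rightarrow> int"
  shows "(if P then (\<Sum>x\<in>F. \<Sum>y\<in>G. if Q x y then a x y else 0) * c else 0)
    = (\<Sum>x\<in>F. \<Sum>y\<in>G. if Q x y then (if P then a x y * c else 0) else 0)"
  by (cases P) (simp_all add: sum_distrib_right if_distrib if_distribR cong: if_cong)

lemma if_prod_expand2:
  fixes a :: "'x \<Rightarrow> 'y \<Rightarrow> int"
  shows "(if P then c * (\<Sum>x\<in>F. \<Sum>y\<in>G. if Q x y then a x y else 0) else 0)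
    = (\<Sum>x\<in>F. \<Sum>y\<in>G. if Q x y then (if P then c * a x y else 0) else 0)"
  by (cases P) (simp_all add: sum_distrib_left if_distrib cong: if_cong)

lemma mr_mult_carrier:
  assumes S: "comm_monoid_zero S" and f: "f \<in> carrier (monoid_ring S)" and g: "g \<in> carrier (monoid_ring S)"
  shows "mult (monoid_ring S) f g \<in> carrier (monoid_ring S)"
proof -
  have ff: "finite (supp f)" "supp f \<subseteq> S_carrier S" and gg: "finite (supp g)" "supp g \<subseteq> S_carrier S"
    using f g by (auto simp: mr_carrier)
  have sub: "supp (mult (monoid_ring S) f g) \<subseteq> (\<lambda>(x,y). S_mult S x y) ` (supp f \<times> supp g)"
    by (rule supp_mult_sub) (use ff gg in auto)
  moreover have "(\<lambda>(x,y). S_mult S x y) ` (supp f \<times> supp g) \<subseteq> S_carrier S"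
    using ff gg S by (auto simp: comm_monoid_zero_def)
  ultimately show ?thesis using ff gg by (auto simp: mr_carrier intro: finite_subset)
qed

lemma mr_assoc:
  assumes S: "comm_monoid_zero S" and f: "f \<in> carrier (monoid_ring S)" and g: "g \<in> carrier (monoid_ring S)"
    and h: "h \<in> carrier (monoid_ring S)"
  shows "mult (monoid_ring S) (mult (monoid_ring S) f g) h = mult (monoid_ring S) f (mult (monoid_ring S) g h)"
proof
  fix z
  let ?m = "S_mult S" let ?R = "monoid_ring S"
  let ?F = "supp f" let ?G = "supp g" let ?H = "supp h"
  let ?U = "(\<lambda>(x,y). ?m x y) ` (?F \<times> ?G)" let ?V = "(\<lambda>(x,y). ?m x y) ` (?G \<times> ?H)"
  have fin: "finite ?F" "finite ?G" "finite ?H" and sc: "?F \<subseteq> S_carrier S" "?G \<subseteq> S_carrier S" "?H \<subseteq> S_carrier S"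
    using f g h by (auto simp: mr_carrier)
  have finU: "finite ?U" "finite ?V" using fin by auto
  have sU: "supp (mult ?R f g) \<subseteq> ?U" "supp (mult ?R g h) \<subseteq> ?V"
    by (rule supp_mult_sub; use fin in auto)+
  have fg: "\<And>u. mult ?R f g u = (\<Sum>x\<in>?F. \<Sum>y\<in>?G. if ?m x y = u then f x * g y else 0)"
    by (rule mr_mult) (use fin in auto)
  have gh: "\<And>v. mult ?R g h v = (\<Sum>y\<in>?G. \<Sum>w\<in>?H. if ?m y w = v then g y * h w else 0)"
    by (rule mr_mult) (use fin in auto)
  have "mult ?R (mult ?R f g) h z = (\<Sum>u\<in>?U. \<Sum>w\<in>?H. if ?m u w = z then mult ?R f g u * h w else 0)"
    by (rule mr_mult) (use fin finU sU in auto)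
  also have "\<dots> = (\<Sum>w\<in>?H. \<Sum>u\<in>?U. if ?m u w = z then mult ?R f g u * h w else 0)"
    by (rule sum.swap)
  also have "\<dots> = (\<Sum>w\<in>?H. \<Sum>u\<in>?U. \<Sum>x\<in>?F. \<Sum>y\<in>?G. if ?m x y = u then (if ?m u w = z then f x * g y * h w else 0) else 0)"
    unfolding fg by (intro sum.cong refl if_prod_expand)
  also have "\<dots> = (\<Sum>w\<in>?H. \<Sum>x\<in>?F. \<Sum>y\<in>?G. if ?m (?m x y) w = z then f x * g y * h w else 0)"
    by (intro sum.cong refl collapse) (use fin finU in auto)
  also have "\<dots> = (\<Sum>x\<in>?F. \<Sum>w\<in>?H. \<Sum>y\<in>?G. if ?m (?m x y) w = z then f x * g y * h w else 0)"
    by (rule sum.swap)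
  also have "\<dots> = (\<Sum>x\<in>?F. \<Sum>y\<in>?G. \<Sum>w\<in>?H. if ?m (?m x y) w = z then f x * g y * h w else 0)"
    by (intro sum.cong refl sum.swap)
  also have "\<dots> = (\<Sum>x\<in>?F. \<Sum>y\<in>?G. \<Sum>w\<in>?H. if ?m x (?m y w) = z then f x * (g y * h w) else 0)"
    using sc S by (intro sum.cong refl) (auto simp: comm_monoid_zero_def subset_iff mult.assoc)
  also have "\<dots> = (\<Sum>x\<in>?F. \<Sum>v\<in>?V. \<Sum>y\<in>?G. \<Sum>w\<in>?H. if ?m y w = v then (if ?m x v = z then f x * (g y * h w) else 0) else 0)"
    by (intro sum.cong refl collapse[symmetric]) (use fin finU in auto)
  also have "\<dots> = (\<Sum>x\<in>?F. \<Sum>v\<in>?V. if ?m x v = z then f x * mult ?R g h v else 0)"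
    unfolding gh by (intro sum.cong refl if_prod_expand2[symmetric])
  also have "\<dots> = mult ?R f (mult ?R g h) z"
    by (rule mr_mult[symmetric]) (use fin finU sU in auto)
  finally show "mult ?R (mult ?R f g) h z = mult ?R f (mult ?R g h) z" .
qed

lemma mr_comm:
  assumes S: "comm_monoid_zero S" and f: "f \<in> carrier (monoid_ring S)" and g: "g \<in> carrier (monoid_ring S)"
  shows "mult (monoid_ring S) f g = mult (monoid_ring S) g f"
proof
  fix z
  have fin: "finite (supp f)" "finite (supp g)" and sc: "supp f \<subseteq> S_carrier S" "supp g \<subseteq> S_carrier S"
    using f g by (auto simp: mr_carrier)
  have "mult (monoid_ring S) f g z = (\<Sum>x\<in>supp f. \<Sum>y\<in>supp g. if S_mult S x y = z then f x * g y else 0)"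
    by (rule mr_mult) (use fin in auto)
  also have "\<dots> = (\<Sum>y\<in>supp g. \<Sum>x\<in>supp f. if S_mult S x y = z then f x * g y else 0)"
    by (rule sum.swap)
  also have "\<dots> = (\<Sum>y\<in>supp g. \<Sum>x\<in>supp f. if S_mult S y x = z then g y * f x else 0)"
    using sc S by (intro sum.cong refl) (auto simp: comm_monoid_zero_def subset_iff mult.commute)
  also have "\<dots> = mult (monoid_ring S) g f z"
    by (rule mr_mult[symmetric]) (use fin in auto)
  finally show "mult (monoid_ring S) f g z = mult (monoid_ring S) g f z" .
qed

lemma mr_l_one:
  assumes S: "comm_monoid_zero S" and f: "f \<in> carrier (monoid_ring S)"
  shows "mult (monoid_ring S) (basis_el (S_one S)) f = f"
proof
  fix z
  have fin: "finite (supp f)" and sc: "supp f \<subseteq> S_carrier S"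
    using f by (auto simp: mr_carrier)
  have "mult (monoid_ring S) (basis_el (S_one S)) f z
      = (\<Sum>x\<in>{S_one S}. \<Sum>y\<in>supp f. if S_mult S x y = z then basis_el (S_one S) x * f y else 0)"
    by (rule mr_mult) (use fin in \<open>auto simp: supp_basis\<close>)
  also have "\<dots> = (\<Sum>y\<in>supp f. if y = z then f y else 0)"
    using sc S by (auto simp: comm_monoid_zero_def subset_iff basis_el_def intro!: sum.cong)
  also have "\<dots> = f z" using fin by (simp add: sum.delta' supp_def)
  finally show "mult (monoid_ring S) (basis_el (S_one S)) f z = f z" .
qed

lemma mr_l_distr:
  assumes S: "comm_monoid_zero S" and f: "f \<in> carrier (monoid_ring S)" and g: "g \<in> carrier (monoid_ring S)"
    and h: "h \<in> carrier (monoid_ring S)"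
  shows "mult (monoid_ring S) (\<lambda>z. f z + g z) h = (\<lambda>z. mult (monoid_ring S) f h z + mult (monoid_ring S) g h z)"
proof
  fix z
  let ?A = "supp f \<union> supp g"
  have fin: "finite (supp f)" "finite (supp g)" "finite (supp h)"
    using f g h by (auto simp: mr_carrier)
  have e1: "mult (monoid_ring S) (\<lambda>z. f z + g z) h z = (\<Sum>x\<in>?A. \<Sum>y\<in>supp h. if S_mult S x y = z then (f x + g x) * h y else 0)"
    by (rule mr_mult) (use fin in \<open>auto simp: supp_def\<close>)
  have e2: "mult (monoid_ring S) f h z = (\<Sum>x\<in>?A. \<Sum>y\<in>supp h. if S_mult S x y = z then f x * h y else 0)"
    by (rule mr_mult) (use fin in \<open>auto simp: supp_def\<close>)
  have e3: "mult (monoid_ring S) g h z = (\<Sum>x\<in>?A. \<Sum>y\<in>supp h. if S_mult S x y = z then g x * h y else 0)"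
    by (rule mr_mult) (use fin in \<open>auto simp: supp_def\<close>)
  show "mult (monoid_ring S) (\<lambda>z. f z + g z) h z = mult (monoid_ring S) f h z + mult (monoid_ring S) g h z"
    unfolding e1 e2 e3 by (simp add: sum.distrib[symmetric] distrib_right cong: if_cong) (intro sum.cong refl, simp)
qed

lemma monoid_ring_cring:
  assumes S: "comm_monoid_zero S"
  shows "cring (monoid_ring S)"
proof (rule cringI)
  show "abelian_group (monoid_ring S)"
  proof (rule abelian_groupI, goal_cases)
    case (1 x y) thus ?case
    proof -
      have "{z. x z + y z \<noteq> 0} \<subseteq> {z. x z \<noteq> 0} \<union> {z. y z \<noteq> 0}" by auto
      thus ?case using 1 by (auto simp: mr_carrier mr_simps supp_def intro: finite_subset)
    qed
  next
    case 2 thus ?case by (auto simp: mr_carrier mr_simps supp_def)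
  next
    case (3 x y z) thus ?case by (auto simp: mr_simps)
  next
    case (4 x y) thus ?case by (auto simp: mr_simps)
  next
    case (5 x) thus ?case by (auto simp: mr_simps)
  next
    case (6 x)
    show ?case
      by (rule bexI[of _ "\<lambda>z. - x z"]) (use 6 in \<open>auto simp: mr_simps mr_carrier supp_def\<close>)
  qed
  show "comm_monoid (monoid_ring S)"
  proof (rule comm_monoidI)
    show "\<one>\<^bsub>monoid_ring S\<^esub> \<in> carrier (monoid_ring S)"
      using S by (simp add: mr_simps mr_carrier supp_basis comm_monoid_zero_def)
  next
    fix x y assume "x \<in> carrier (monoid_ring S)" "y \<in> carrier (monoid_ring S)"
    thus "x \<otimes>\<^bsub>monoid_ring S\<^esub> y \<in> carrier (monoid_ring S)" "x \<otimes>\<^bsub>monoid_ring S\<^esub> y = y \<otimes>\<^bsub>monoid_ring S\<^esub> x"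
      using S by (simp_all add: mr_mult_carrier mr_comm[OF S])
  next
    fix x y z assume "x \<in> carrier (monoid_ring S)" "y \<in> carrier (monoid_ring S)" "z \<in> carrier (monoid_ring S)"
    thus "x \<otimes>\<^bsub>monoid_ring S\<^esub> y \<otimes>\<^bsub>monoid_ring S\<^esub> z = x \<otimes>\<^bsub>monoid_ring S\<^esub> (y \<otimes>\<^bsub>monoid_ring S\<^esub> z)"
      using S by (simp add: mr_assoc)
  next
    fix x assume "x \<in> carrier (monoid_ring S)"
    thus "\<one>\<^bsub>monoid_ring S\<^esub> \<otimes>\<^bsub>monoid_ring S\<^esub> x = x" using S by (simp add: mr_simps mr_l_one)
  qed
  show "\<And>x y z. x \<in> carrier (monoid_ring S) \<Longrightarrow> y \<in> carrier (monoid_ring S) \<Longrightarrow> z \<in> carrier (monoid_ring S) \<Longrightarrow>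
    (x \<oplus>\<^bsub>monoid_ring S\<^esub> y) \<otimes>\<^bsub>monoid_ring S\<^esub> z = x \<otimes>\<^bsub>monoid_ring S\<^esub> z \<oplus>\<^bsub>monoid_ring S\<^esub> y \<otimes>\<^bsub>monoid_ring S\<^esub> z"
    using S by (simp add: mr_simps mr_l_distr)
qed

definition lin :: "('r,'m) ring_scheme \<Rightarrow> ('a \<Rightarrow> 'r) \<Rightarrow> ('a \<Rightarrow> int) \<Rightarrow> 'r" where
  "lin R v k = finsum R (\<lambda>x. add_pow R (k x) (v x)) {x. k x \<noteq> 0}"

lemma push_eq: assumes "finite (supp k)" shows "push_comb f k y = (\<Sum>x\<in>supp k. if f x = y then k x else 0)"
proof -
  have "{x. k x \<noteq> 0 \<and> f x = y} = {x\<in>supp k. f x = y}" by (auto simp: supp_def)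
  thus ?thesis unfolding push_comb_def using sum.inter_filter[OF assms, of k "\<lambda>x. f x = y"] by simp
qed

lemma supp_push: assumes "finite (supp k)" shows "supp (push_comb f k) \<subseteq> f ` supp k"
proof
  fix y assume "y \<in> supp (push_comb f k)"
  hence "(\<Sum>x\<in>supp k. if f x = y then k x else 0) \<noteq> 0" by (simp add: supp_def push_eq[OF assms])
  then obtain x where "x \<in> supp k" "(if f x = y then k x else 0) \<noteq> 0"
    using sum.not_neutral_contains_not_neutral by blast
  thus "y \<in> f ` supp k" by (auto split: if_splits)
qed

context abelian_group begin

lemma add_pow_0 [simp]: "add_pow G (0::int) x = \<zero>"
  by (simp add: add_pow_def)

lemma add_pow_if: "add_pow G (if c then n else 0::int) x = (if c then add_pow G n x else \<zero>)"
  by simp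

lemma lin_superset:
  assumes "finite A" "supp k \<subseteq> A" "v \<in> A \<rightarrow> carrier G"
  shows "lin G v k = (\<Oplus>x\<in>A. add_pow G (k x) (v x))"
  unfolding lin_def
  by (rule add.finprod_mono_neutral_cong_left) (use assms in \<open>auto simp: supp_def\<close>)

lemma add_pow_sum:
  assumes "finite I" "x \<in> carrier G"
  shows "add_pow G (\<Sum>i\<in>I. n i :: int) x = (\<Oplus>i\<in>I. add_pow G (n i) x)"
  using assms(1)
proof (induction I rule: finite_induct)
  case empty thus ?case by simp
next
  case (insert a F) thus ?case using assms(2) by (simp add: add.int_pow_mult)
qed

lemma add_pow_sum_if:
  assumes "finite I" "x \<in> carrier G"
  shows "add_pow G (\<Sum>i\<in>I. if P i then n i else 0 :: int) x = (\<Oplus>i\<in>I. if P i then add_pow G (n i) x else \<zero>)"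
  using assms by (simp add: add_pow_sum) (intro finsum_cong', auto)

lemma finsum_swap:
  assumes "finite A" "finite B" "\<And>a b. a \<in> A \<Longrightarrow> b \<in> B \<Longrightarrow> f a b \<in> carrier G"
  shows "(\<Oplus>a\<in>A. \<Oplus>b\<in>B. f a b) = (\<Oplus>b\<in>B. \<Oplus>a\<in>A. f a b)"
  using assms(1,3)
proof (induction A rule: finite_induct)
  case empty thus ?case by (simp add: finsum_zero)
next
  case (insert a F)
  have "(\<Oplus>a\<in>insert a F. \<Oplus>b\<in>B. f a b) = (\<Oplus>b\<in>B. f a b) \<oplus> (\<Oplus>a\<in>F. \<Oplus>b\<in>B. f a b)"
    using insert by (intro finsum_insert) (auto intro!: finsum_closed)
  also have "\<dots> = (\<Oplus>b\<in>B. f a b) \<oplus> (\<Oplus>b\<in>B. \<Oplus>a\<in>F. f a b)" using insert by simp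
  also have "\<dots> = (\<Oplus>b\<in>B. f a b \<oplus> (\<Oplus>a\<in>F. f a b))"
    using insert by (intro finsum_addf[symmetric]) (auto intro!: finsum_closed)
  also have "\<dots> = (\<Oplus>b\<in>B. \<Oplus>a\<in>insert a F. f a b)"
    using insert by (intro finsum_cong' refl) (auto intro!: finsum_closed)
  finally show ?case .
qed

lemma finsum_delta:
  assumes "finite U" "t \<in> U" "c \<in> U \<rightarrow> carrier G"
  shows "(\<Oplus>u\<in>U. if t = u then c u else \<zero>) = c t"
  using add.finprod_singleton[OF assms(2,1), of c] assms by simp

lemma lin_add:
  assumes "finite (supp k)" "finite (supp l)" "v \<in> D \<rightarrow> carrier G" "supp k \<subseteq> D" "supp l \<subseteq> D"
  shows "lin G v (\<lambda>z. k z + l z) = lin G v k \<oplus> lin G v l"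
proof -
  let ?A = "supp k \<union> supp l"
  have v: "v \<in> ?A \<rightarrow> carrier G" using assms by auto
  have "lin G v (\<lambda>z. k z + l z) = (\<Oplus>x\<in>?A. add_pow G (k x + l x) (v x))"
    by (rule lin_superset) (use assms v in \<open>auto simp: supp_def\<close>)
  also have "\<dots> = (\<Oplus>x\<in>?A. add_pow G (k x) (v x) \<oplus> add_pow G (l x) (v x))"
    using v by (intro finsum_cong') (auto simp: add.int_pow_mult Pi_iff)
  also have "\<dots> = (\<Oplus>x\<in>?A. add_pow G (k x) (v x)) \<oplus> (\<Oplus>x\<in>?A. add_pow G (l x) (v x))"
    using v by (intro finsum_addf) auto
  also have "\<dots> = lin G v k \<oplus> lin G v l"
    using assms v by (subst (1 2) lin_superset[of ?A]) auto
  finally show ?thesis .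
qed

lemma lin_basis:
  assumes "v a \<in> carrier G"
  shows "lin G v (basis_el a) = v a"
  using assms by (subst lin_superset[of "{a}"]) (auto simp: supp_basis, simp add: basis_el_def add.int_pow_1)

lemma lin_closed:
  assumes "finite (supp k)" "v \<in> supp k \<rightarrow> carrier G"
  shows "lin G v k \<in> carrier G"
  unfolding lin_def using assms by (intro finsum_closed) (auto simp: supp_def)

lemma lin_push:
  assumes "finite (supp k)" "supp k \<subseteq> D" "f \<in> D \<rightarrow> E" "v \<in> E \<rightarrow> carrier G"
  shows "lin G v (push_comb f k) = lin G (v \<circ> f) k"
proof -
  let ?Y = "f ` supp k"
  have vY: "v \<in> ?Y \<rightarrow> carrier G" using assms by auto
  have "lin G v (push_comb f k) = (\<Oplus>y\<in>?Y. add_pow G (push_comb f k y) (v y))"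
    by (rule lin_superset) (use assms vY supp_push[OF assms(1), of f] in auto)
  also have "\<dots> = (\<Oplus>y\<in>?Y. \<Oplus>x\<in>supp k. if f x = y then add_pow G (k x) (v y) else \<zero>)"
    using vY assms by (intro finsum_cong') (auto simp: push_eq[OF assms(1)] add_pow_sum_if Pi_iff intro!: finsum_closed)
  also have "\<dots> = (\<Oplus>x\<in>supp k. \<Oplus>y\<in>?Y. if f x = y then add_pow G (k x) (v y) else \<zero>)"
    using vY assms by (intro finsum_swap) auto
  also have "\<dots> = (\<Oplus>x\<in>supp k. add_pow G (k x) (v (f x)))"
    using vY assms by (intro finsum_cong' refl finsum_delta[where c="\<lambda>y. add_pow G (k _) (v y)", simplified]) (auto simp: Pi_iff)
  also have "\<dots> = lin G (v \<circ> f) k" unfolding lin_def supp_def by simp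
  finally show ?thesis .
qed

end


context cring begin

lemma add_pow_mult_mult:
  assumes "p \<in> carrier R" "q \<in> carrier R"
  shows "add_pow R (a * b :: int) (p \<otimes> q) = add_pow R a p \<otimes> add_pow R b q"
  using assms by (simp add: add_pow_ldistr_int add_pow_rdistr_int add.int_pow_pow mult.commute)

lemma lin_mult:
  assumes S: "comm_monoid_zero S" and psi: "\<psi> \<in> S_carrier S \<rightarrow> carrier R"
    and mul: "\<And>x y. x \<in> S_carrier S \<Longrightarrow> y \<in> S_carrier S \<Longrightarrow> \<psi> (S_mult S x y) = \<psi> x \<otimes> \<psi> y"
    and k: "k \<in> carrier (monoid_ring S)" and l: "l \<in> carrier (monoid_ring S)"
  shows "lin R \<psi> (mult (monoid_ring S) k l) = lin R \<psi> k \<otimes> lin R \<psi> l"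
proof -
  let ?m = "S_mult S" let ?F = "supp k" let ?H = "supp l"
  let ?U = "(\<lambda>(x,y). ?m x y) ` (?F \<times> ?H)"
  have fin: "finite ?F" "finite ?H" and sc: "?F \<subseteq> S_carrier S" "?H \<subseteq> S_carrier S"
    using k l by (auto simp: mr_carrier)
  have Uc: "?U \<subseteq> S_carrier S" using sc S by (auto simp: comm_monoid_zero_def)
  have finU: "finite ?U" using fin by auto
  have pU: "\<psi> \<in> ?U \<rightarrow> carrier R" using Uc psi by auto
  have pc: "\<And>x. x \<in> S_carrier S \<Longrightarrow> \<psi> x \<in> carrier R" using psi by auto
  have pF: "\<And>x. x \<in> ?F \<Longrightarrow> \<psi> x \<in> carrier R" "\<And>x. x \<in> ?H \<Longrightarrow> \<psi> x \<in> carrier R"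
    using pc sc by auto
  have mulF: "\<And>x y. x \<in> ?F \<Longrightarrow> y \<in> ?H \<Longrightarrow> \<psi> (?m x y) = \<psi> x \<otimes> \<psi> y"
    using mul sc by auto
  have mc: "\<And>x y. x \<in> ?F \<Longrightarrow> y \<in> ?H \<Longrightarrow> ?m x y \<in> ?U" by auto
  have kl: "\<And>z. mult (monoid_ring S) k l z = (\<Sum>x\<in>?F. \<Sum>y\<in>?H. if ?m x y = z then k x * l y else 0)"
    by (rule mr_mult) (use fin in auto)
  have "lin R \<psi> (mult (monoid_ring S) k l) = (\<Oplus>z\<in>?U. add_pow R (mult (monoid_ring S) k l z) (\<psi> z))"
    by (rule lin_superset) (use finU pU supp_mult_sub[of ?F k ?H l S] fin in auto)
  also have "\<dots> = (\<Oplus>z\<in>?U. \<Oplus>x\<in>?F. \<Oplus>y\<in>?H. if ?m x y = z then add_pow R (k x * l y) (\<psi> z) else \<zero>)"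
    unfolding kl using pU fin
    by (intro finsum_cong') (auto simp: add_pow_sum add_pow_sum_if Pi_iff intro!: finsum_closed finsum_cong')
  also have "\<dots> = (\<Oplus>x\<in>?F. \<Oplus>z\<in>?U. \<Oplus>y\<in>?H. if ?m x y = z then add_pow R (k x * l y) (\<psi> z) else \<zero>)"
    using pU fin finU by (intro finsum_swap) (auto simp: Pi_iff intro!: finsum_closed)
  also have "\<dots> = (\<Oplus>x\<in>?F. \<Oplus>y\<in>?H. \<Oplus>z\<in>?U. if ?m x y = z then add_pow R (k x * l y) (\<psi> z) else \<zero>)"
    using pU fin finU by (intro finsum_cong' refl finsum_swap) (auto simp: Pi_iff intro!: finsum_closed)
  also have "\<dots> = (\<Oplus>x\<in>?F. \<Oplus>y\<in>?H. add_pow R (k x * l y) (\<psi> (?m x y)))"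
    using pU fin finU mc
    by (intro finsum_cong' refl finsum_delta[where c="\<lambda>z. add_pow R (k _ * l _) (\<psi> z)", simplified])
       (auto simp: Pi_iff intro!: finsum_closed)
  also have "\<dots> = (\<Oplus>x\<in>?F. \<Oplus>y\<in>?H. add_pow R (k x) (\<psi> x) \<otimes> add_pow R (l y) (\<psi> y))"
    using pF mulF by (intro finsum_cong' refl) (auto simp: add_pow_mult_mult intro!: finsum_closed)
  also have "\<dots> = (\<Oplus>x\<in>?F. add_pow R (k x) (\<psi> x) \<otimes> (\<Oplus>y\<in>?H. add_pow R (l y) (\<psi> y)))"
    using pF fin by (intro finsum_cong' refl finsum_rdistr[symmetric]) (auto intro!: finsum_closed)
  also have "\<dots> = (\<Oplus>x\<in>?F. add_pow R (k x) (\<psi> x)) \<otimes> (\<Oplus>y\<in>?H. add_pow R (l y) (\<psi> y))"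
    using pF fin by (intro finsum_ldistr[symmetric]) (auto intro!: finsum_closed)
  also have "\<dots> = lin R \<psi> k \<otimes> lin R \<psi> l" unfolding lin_def supp_def ..
  finally show ?thesis .
qed

lemma lin_ring_hom:
  assumes S: "comm_monoid_zero S" and psi: "\<psi> \<in> S_carrier S \<rightarrow> carrier R"
    and mul: "\<And>x y. x \<in> S_carrier S \<Longrightarrow> y \<in> S_carrier S \<Longrightarrow> \<psi> (S_mult S x y) = \<psi> x \<otimes> \<psi> y"
    and one: "\<psi> (S_one S) = \<one>"
  shows "lin R \<psi> \<in> ring_hom (monoid_ring S) R"
proof (rule ring_hom_memI)
  fix x assume "x \<in> carrier (monoid_ring S)"
  thus "lin R \<psi> x \<in> carrier R" using psi by (intro lin_closed) (auto simp: mr_carrier)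
next
  fix x y assume "x \<in> carrier (monoid_ring S)" "y \<in> carrier (monoid_ring S)"
  thus "lin R \<psi> (x \<otimes>\<^bsub>monoid_ring S\<^esub> y) = lin R \<psi> x \<otimes> lin R \<psi> y"
    using lin_mult[OF S psi mul] by blast
  show "lin R \<psi> (x \<oplus>\<^bsub>monoid_ring S\<^esub> y) = lin R \<psi> x \<oplus> lin R \<psi> y"
    using \<open>x \<in> _\<close> \<open>y \<in> _\<close> psi by (simp add: mr_simps) (rule lin_add, auto simp: mr_carrier)
next
  show "lin R \<psi> \<one>\<^bsub>monoid_ring S\<^esub> = \<one>"
    using psi S one by (simp add: mr_simps lin_basis comm_monoid_zero_def Pi_iff)
qed

end


lemma (in ring_hom_cring) hom_add_pow:
  assumes x: "x \<in> carrier R"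
  shows "h (add_pow R (n::int) x) = add_pow S n (h x)"
proof -
  have nat: "h (add_pow R (m::nat) x) = add_pow S m (h x)" for m
  proof (induction m)
    case 0 thus ?case by simp
  next
    case (Suc m)
    have "add_pow R (Suc m) x = add_pow R m x \<oplus> x" using R.add.nat_pow_Suc by simp
    moreover have "add_pow S (Suc m) (h x) = add_pow S m (h x) \<oplus>\<^bsub>S\<^esub> h x" using S.add.nat_pow_Suc by simp
    ultimately show ?case using Suc x by simp
  qed
  show ?thesis
  proof (cases "n \<ge> 0")
    case True thus ?thesis using nat[of "nat n"] by (simp add: add_pow_int_ge)
  next
    case False thus ?thesis using nat[of "nat (-n)"] x by (simp add: add_pow_int_lt)
  qed
qed

lemma basis_carrier: "a \<in> S_carrier T \<Longrightarrow> basis_el a \<in> carrier (monoid_ring T)"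
  by (simp add: mr_carrier supp_basis)

lemma basis_mult:
  assumes "a \<in> S_carrier T" "b \<in> S_carrier T"
  shows "mult (monoid_ring T) (basis_el a) (basis_el b) = basis_el (S_mult T a b)"
proof
  fix z
  have "mult (monoid_ring T) (basis_el a) (basis_el b) z
     = (\<Sum>x\<in>{a}. \<Sum>y\<in>{b}. if S_mult T x y = z then basis_el a x * basis_el b y else 0)"
    by (rule mr_mult) (auto simp: supp_basis)
  thus "mult (monoid_ring T) (basis_el a) (basis_el b) z = basis_el (S_mult T a b) z"
    by (simp add: basis_el_def)
qed

lemma mr_add_pow:
  assumes T: "comm_monoid_zero T" and f: "f \<in> carrier (monoid_ring T)"
  shows "add_pow (monoid_ring T) (n::int) f = (\<lambda>z. n * f z)"
proof -
  interpret Z: cring "monoid_ring T" by (rule monoid_ring_cring[OF T])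
  have nat: "add_pow (monoid_ring T) (m::nat) f = (\<lambda>z. int m * f z)" for m
  proof (induction m)
    case 0 thus ?case by (simp add: mr_simps)
  next
    case (Suc m)
    have "add_pow (monoid_ring T) (Suc m) f = add_pow (monoid_ring T) m f \<oplus>\<^bsub>monoid_ring T\<^esub> f"
      using Z.add.nat_pow_Suc by simp
    thus ?case using Suc by (simp add: mr_simps algebra_simps)
  qed
  have neg: "\<ominus>\<^bsub>monoid_ring T\<^esub> g = (\<lambda>z. - g z)" if g: "g \<in> carrier (monoid_ring T)" for g
  proof -
    have c: "(\<lambda>z. - g z) \<in> carrier (monoid_ring T)" using g by (simp add: mr_carrier supp_def)
    have "(\<lambda>z. - g z) \<oplus>\<^bsub>monoid_ring T\<^esub> g = \<zero>\<^bsub>monoid_ring T\<^esub>" by (simp add: mr_simps)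
    thus ?thesis using Z.minus_equality[OF _ g c] by simp
  qed
  show ?thesis
  proof (cases "n \<ge> 0")
    case True thus ?thesis using nat[of "nat n"] by (simp add: add_pow_int_ge)
  next
    case False
    have "add_pow (monoid_ring T) (nat (-n)) f \<in> carrier (monoid_ring T)" using f by simp
    thus ?thesis using nat[of "nat (-n)"] False by (simp add: add_pow_int_lt neg)
  qed
qed

lemma mr_finsum:
  assumes T: "comm_monoid_zero T" and "finite A" and g: "g \<in> A \<rightarrow> carrier (monoid_ring T)"
  shows "finsum (monoid_ring T) g A = (\<lambda>z. \<Sum>X\<in>A. g X z)"
  using assms(2) g
proof (induction A rule: finite_induct)
  case empty
  interpret Z: cring "monoid_ring T" by (rule monoid_ring_cring[OF T])
  show ?case by (simp add: mr_simps)
next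
  case (insert a F)
  interpret Z: cring "monoid_ring T" by (rule monoid_ring_cring[OF T])
  show ?case using insert by (simp add: mr_simps)
qed

lemma mr_expansion:
  assumes T: "comm_monoid_zero T" and k: "k \<in> carrier (monoid_ring T)"
  shows "finsum (monoid_ring T) (\<lambda>X. add_pow (monoid_ring T) (k X) (basis_el X)) (supp k) = k"
proof -
  interpret Z: cring "monoid_ring T" by (rule monoid_ring_cring[OF T])
  have fin: "finite (supp k)" and sc: "supp k \<subseteq> S_carrier T" using k by (auto simp: mr_carrier)
  have "finsum (monoid_ring T) (\<lambda>X. add_pow (monoid_ring T) (k X) (basis_el X)) (supp k)
      = finsum (monoid_ring T) (\<lambda>X. (\<lambda>z. k X * basis_el X z)) (supp k)"
  proof -
    have b: "\<And>X. X \<in> supp k \<Longrightarrow> basis_el X \<in> carrier (monoid_ring T)" using sc by (auto intro: basis_carrier)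
    have e: "\<And>X. X \<in> supp k \<Longrightarrow> add_pow (monoid_ring T) (k X) (basis_el X) = (\<lambda>z. k X * basis_el X z)"
      using b by (simp add: mr_add_pow[OF T])
    have c: "(\<lambda>X. (\<lambda>z. k X * basis_el X z)) \<in> supp k \<rightarrow> carrier (monoid_ring T)"
      using b e[symmetric] by (auto simp: Pi_iff)
    show ?thesis by (rule Z.finsum_cong'[OF refl c e])
  qed
  also have "\<dots> = (\<lambda>z. \<Sum>X\<in>supp k. k X * basis_el X z)"
    using sc by (intro mr_finsum[OF T fin]) (auto simp: mr_carrier supp_def basis_el_def)
  also have "\<dots> = k"
  proof
    fix z
    have "(\<Sum>X\<in>supp k. k X * basis_el X z) = (\<Sum>X\<in>supp k. if X = z then k X else 0)"
      by (intro sum.cong) (auto simp: basis_el_def)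
    also have "\<dots> = k z" using fin by (simp add: sum.delta supp_def)
    finally show "(\<Sum>X\<in>supp k. k X * basis_el X z) = k z" .
  qed
  finally show ?thesis .
qed

lemma lin_hom:
  assumes T: "comm_monoid_zero T" and R2: "cring R2" and H: "H \<in> ring_hom (monoid_ring T) R2"
    and k: "k \<in> carrier (monoid_ring T)"
  shows "lin R2 (H \<circ> basis_el) k = H k"
proof -
  interpret Z: cring "monoid_ring T" by (rule monoid_ring_cring[OF T])
  interpret h: ring_hom_cring "monoid_ring T" R2 H by (intro ring_hom_cring.intro ring_hom_cring_axioms.intro Z.is_cring R2 H)
  have fin: "finite (supp k)" and sc: "supp k \<subseteq> S_carrier T" using k by (auto simp: mr_carrier)
  have bc: "\<And>X. X \<in> supp k \<Longrightarrow> basis_el X \<in> carrier (monoid_ring T)" using sc by (auto intro: basis_carrier)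
  have "H k = H (finsum (monoid_ring T) (\<lambda>X. add_pow (monoid_ring T) (k X) (basis_el X)) (supp k))"
    using mr_expansion[OF T k] by simp
  also have "\<dots> = finsum R2 (\<lambda>X. H (add_pow (monoid_ring T) (k X) (basis_el X))) (supp k)"
    using bc by (subst h.hom_finsum) (auto simp: comp_def)
  also have "\<dots> = finsum R2 (\<lambda>X. add_pow R2 (k X) (H (basis_el X))) (supp k)"
    using bc by (intro h.S.finsum_cong') (auto simp: h.hom_add_pow)
  also have "\<dots> = lin R2 (H \<circ> basis_el) k" by (simp add: lin_def supp_def)
  finally show ?thesis by simp
qed

definition mcong :: "'a sesquiad \<Rightarrow> ('a \<times> 'a) set \<Rightarrow> bool" where
  "mcong S C \<longleftrightarrow> equiv (S_carrier S) C \<and>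
     (\<forall>a b c. (a, b) \<in> C \<longrightarrow> c \<in> S_carrier S \<longrightarrow> (S_mult S a c, S_mult S b c) \<in> C)"

lemma cls_in_quot: "a \<in> S_carrier S \<Longrightarrow> cls C a \<in> S_carrier S // C"
  by (simp add: cls_def quotientI)

lemma quot_repr: "X \<in> A // C \<Longrightarrow> \<exists>a\<in>A. X = cls C a"
  by (auto simp: cls_def quotient_def)

lemma cls_eq_iff: "equiv A C \<Longrightarrow> a \<in> A \<Longrightarrow> b \<in> A \<Longrightarrow> cls C a = cls C b \<longleftrightarrow> (a, b) \<in> C"
  unfolding cls_def by (simp add: eq_equiv_class_iff)

lemma some_cls: "equiv A C \<Longrightarrow> a \<in> A \<Longrightarrow> (a, SOME x. x \<in> cls C a) \<in> C"
  unfolding cls_def by (rule someI2[of _ a]) (auto simp: equiv_def refl_on_def)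

lemma some_cls_in: "equiv A C \<Longrightarrow> a \<in> A \<Longrightarrow> (SOME x. x \<in> cls C a) \<in> A"
  using some_cls[of A C a] by (auto simp: equiv_def refl_on_def)

lemma mcong_both:
  assumes S: "comm_monoid_zero S" and C: "mcong S C" and "(a, x) \<in> C" "(b, y) \<in> C"
  shows "(S_mult S a b, S_mult S x y) \<in> C"
proof -
  have eq: "equiv (S_carrier S) C" using C by (simp add: mcong_def)
  have inC: "a \<in> S_carrier S" "b \<in> S_carrier S" "x \<in> S_carrier S" "y \<in> S_carrier S"
    using assms(3,4) eq by (auto simp: equiv_def refl_on_def)
  have 1: "(S_mult S a y, S_mult S x y) \<in> C" using C assms(3) inC by (auto simp: mcong_def)
  have "(S_mult S b a, S_mult S y a) \<in> C" using C assms(4) inC by (auto simp: mcong_def)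
  hence 2: "(S_mult S a b, S_mult S a y) \<in> C" using S inC by (simp add: comm_monoid_zero_def)
  show ?thesis using 1 2 eq by (meson equiv_def trans_def)
qed

lemma quot_mult_cls:
  assumes S: "comm_monoid_zero S" and C: "mcong S C" and a: "a \<in> S_carrier S" and b: "b \<in> S_carrier S"
  shows "S_mult (quot_with S C \<sigma>) (cls C a) (cls C b) = cls C (S_mult S a b)"
proof -
  have eq: "equiv (S_carrier S) C" using C by (simp add: mcong_def)
  have "(S_mult S a b, S_mult S (SOME x. x \<in> cls C a) (SOME y. y \<in> cls C b)) \<in> C"
    by (rule mcong_both[OF S C some_cls[OF eq a] some_cls[OF eq b]])
  hence "cls C (S_mult S (SOME x. x \<in> cls C a) (SOME y. y \<in> cls C b)) = cls C (S_mult S a b)"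
    unfolding cls_def using eq by (metis equiv_class_eq)
  thus ?thesis by (simp add: quot_with_def)
qed

lemma quot_cmz:
  assumes S: "comm_monoid_zero S" and C: "mcong S C"
  shows "comm_monoid_zero (quot_with S C \<sigma>)"
proof -
  let ?Q = "quot_with S C \<sigma>"
  have eq: "equiv (S_carrier S) C" using C by (simp add: mcong_def)
  have Sc: "S_one S \<in> S_carrier S" "S_zero S \<in> S_carrier S"
    "\<And>x y. x \<in> S_carrier S \<Longrightarrow> y \<in> S_carrier S \<Longrightarrow> S_mult S x y \<in> S_carrier S"
    using S by (auto simp: comm_monoid_zero_def)
  have m: "\<And>a b. a \<in> S_carrier S \<Longrightarrow> b \<in> S_carrier S \<Longrightarrow> S_mult ?Q (cls C a) (cls C b) = cls C (S_mult S a b)"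
    by (rule quot_mult_cls[OF S C])
  have car: "S_carrier ?Q = S_carrier S // C" "S_one ?Q = cls C (S_one S)" "S_zero ?Q = cls C (S_zero S)"
    by (simp_all add: quot_with_def)
  show ?thesis unfolding comm_monoid_zero_def car
  proof (intro conjI ballI)
    show "cls C (S_one S) \<in> S_carrier S // C" "cls C (S_zero S) \<in> S_carrier S // C"
      using Sc by (auto intro: cls_in_quot)
  next
    fix X Y assume "X \<in> S_carrier S // C" "Y \<in> S_carrier S // C"
    then obtain a b where ab: "a \<in> S_carrier S" "b \<in> S_carrier S" "X = cls C a" "Y = cls C b"
      by (metis quot_repr)
    show "S_mult ?Q X Y \<in> S_carrier S // C" using ab m Sc by (auto intro: cls_in_quot)
    show "S_mult ?Q X Y = S_mult ?Q Y X" using ab m S by (simp add: comm_monoid_zero_def)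
  next
    fix X Y Z assume "X \<in> S_carrier S // C" "Y \<in> S_carrier S // C" "Z \<in> S_carrier S // C"
    then obtain a b c where ab: "a \<in> S_carrier S" "b \<in> S_carrier S" "c \<in> S_carrier S"
      "X = cls C a" "Y = cls C b" "Z = cls C c"
      by (metis quot_repr)
    have "S_mult S (S_mult S a b) c = S_mult S a (S_mult S b c)" using S ab unfolding comm_monoid_zero_def by blast
    thus "S_mult ?Q (S_mult ?Q X Y) Z = S_mult ?Q X (S_mult ?Q Y Z)"
      using ab m Sc by simp
  next
    fix X assume "X \<in> S_carrier S // C"
    then obtain a where ab: "a \<in> S_carrier S" "X = cls C a" by (metis quot_repr)
    have "S_mult S (S_one S) a = a" "S_mult S (S_zero S) a = S_zero S"
      using S ab unfolding comm_monoid_zero_def by blast+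
    thus "S_mult ?Q (cls C (S_one S)) X = X" "S_mult ?Q (cls C (S_zero S)) X = cls C (S_zero S)"
      using ab m Sc by simp_all
  qed
qed


definition qmon :: "'a sesquiad \<Rightarrow> ('a \<times> 'a) set \<Rightarrow> 'a set sesquiad" where
  "qmon S C = quot_with S C (\<lambda>_ _. False)"

lemma monoid_ring_quot_indep: "monoid_ring (quot_with S C \<sigma>) = monoid_ring (qmon S C)"
  by (simp add: monoid_ring_def quot_with_def qmon_def)

lemma qmon_simps: "S_carrier (qmon S C) = S_carrier S // C" "S_one (qmon S C) = cls C (S_one S)"
  "S_zero (qmon S C) = cls C (S_zero S)" "S_mult (qmon S C) = S_mult (quot_with S C \<sigma>)"
  by (simp_all add: qmon_def quot_with_def)

lemma lin_cong:
  assumes "\<And>x. x \<in> supp k \<Longrightarrow> v x = w x"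
  shows "lin R v k = lin R w k"
  unfolding lin_def
proof (intro arg_cong[where f="\<lambda>f. finsum R f _"] ext)
  fix x show "add_pow R (k x) (v x) = add_pow R (k x) (w x)"
    using assms by (cases "k x = 0") (simp_all add: add_pow_def supp_def)
qed

definition char :: "'a sesquiad \<Rightarrow> ('r,'m) ring_scheme \<Rightarrow> ('a \<Rightarrow> 'r) \<Rightarrow> bool" where
  "char S R \<psi> \<longleftrightarrow> cring R \<and> \<psi> \<in> S_carrier S \<rightarrow> carrier R \<and> \<psi> (S_one S) = \<one>\<^bsub>R\<^esub> \<and>
     \<psi> (S_zero S) = \<zero>\<^bsub>R\<^esub> \<and>
     (\<forall>x\<in>S_carrier S. \<forall>y\<in>S_carrier S. \<psi> (S_mult S x y) = \<psi> x \<otimes>\<^bsub>R\<^esub> \<psi> y)"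

lemma char_quot:
  assumes S: "comm_monoid_zero S" and C: "mcong S C" and ch: "char S R \<psi>"
    and resp: "\<And>a b. (a, b) \<in> C \<Longrightarrow> \<psi> a = \<psi> b"
  shows "char (qmon S C) R (\<lambda>X. \<psi> (SOME x. x \<in> X))"
    and "\<And>a. a \<in> S_carrier S \<Longrightarrow> \<psi> (SOME x. x \<in> cls C a) = \<psi> a"
proof -
  have eq: "equiv (S_carrier S) C" using C by (simp add: mcong_def)
  show cl: "\<And>a. a \<in> S_carrier S \<Longrightarrow> \<psi> (SOME x. x \<in> cls C a) = \<psi> a"
    using some_cls[OF eq] resp by (metis)
  have Sc: "S_one S \<in> S_carrier S" "S_zero S \<in> S_carrier S"
    "\<And>x y. x \<in> S_carrier S \<Longrightarrow> y \<in> S_carrier S \<Longrightarrow> S_mult S x y \<in> S_carrier S"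
    using S by (auto simp: comm_monoid_zero_def)
  show "char (qmon S C) R (\<lambda>X. \<psi> (SOME x. x \<in> X))"
    unfolding char_def
  proof (intro conjI ballI)
    show "cring R" using ch by (simp add: char_def)
    show "(\<lambda>X. \<psi> (SOME x. x \<in> X)) \<in> S_carrier (qmon S C) \<rightarrow> carrier R"
    proof
      fix X assume "X \<in> S_carrier (qmon S C)"
      then obtain a where "a \<in> S_carrier S" "X = cls C a" by (metis qmon_simps(1) quot_repr)
      thus "\<psi> (SOME x. x \<in> X) \<in> carrier R" using cl ch by (auto simp: char_def)
    qed
    show "\<psi> (SOME x. x \<in> S_one (qmon S C)) = \<one>\<^bsub>R\<^esub>" "\<psi> (SOME x. x \<in> S_zero (qmon S C)) = \<zero>\<^bsub>R\<^esub>"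
      using cl Sc ch by (auto simp: qmon_simps char_def)
  next
    fix X Y assume "X \<in> S_carrier (qmon S C)" "Y \<in> S_carrier (qmon S C)"
    then obtain a b where ab: "a \<in> S_carrier S" "X = cls C a" "b \<in> S_carrier S" "Y = cls C b"
      by (metis qmon_simps(1) quot_repr)
    show "\<psi> (SOME x. x \<in> S_mult (qmon S C) X Y) = \<psi> (SOME x. x \<in> X) \<otimes>\<^bsub>R\<^esub> \<psi> (SOME x. x \<in> Y)"
      using ab cl Sc ch quot_mult_cls[OF S C ab(1,3), where \<sigma>="\<lambda>_ _. False"] by (auto simp: qmon_def char_def)
  qed
qed


lemma (in abelian_group) minus_zero_iff:
  assumes "a \<in> carrier G" "b \<in> carrier G"
  shows "a \<ominus> b = \<zero> \<longleftrightarrow> a = b"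
proof
  assume "a \<ominus> b = \<zero>"
  hence "a \<oplus> \<ominus> b = \<zero>" by (simp add: minus_eq)
  hence "\<ominus> (\<ominus> b) = a" using assms by (intro minus_equality) (auto simp: a_comm)
  thus "a = b" using assms by simp
qed (use assms in \<open>simp add: minus_eq r_neg\<close>)

lemma MC:
  fixes S :: "'a sesquiad" and C :: "('a \<times> 'a) set" and I :: "'i set"
    and R :: "'i \<Rightarrow> ('r,'m) ring_scheme" and \<psi> :: "'i \<Rightarrow> 'a \<Rightarrow> 'r"
  assumes S: "comm_monoid_zero S" and C: "mcong S C"
    and ch: "\<And>i. i \<in> I \<Longrightarrow> char S (R i) (\<psi> i)"
    and resp: "\<And>i a b. i \<in> I \<Longrightarrow> (a, b) \<in> C \<Longrightarrow> \<psi> i a = \<psi> i b"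
    and sep: "\<And>a b. a \<in> S_carrier S \<Longrightarrow> b \<in> S_carrier S \<Longrightarrow> (\<forall>i\<in>I. \<psi> i a = \<psi> i b) \<Longrightarrow> (a, b) \<in> C"
    and sums: "\<And>k a. S_sum S k a \<Longrightarrow> fin_comb (S_carrier S) k \<and> a \<in> S_carrier S \<and>
                 (\<forall>i\<in>I. lin (R i) (\<psi> i) k = \<psi> i a)"
  shows "is_congruence S C"
proof -
  have eq: "equiv (S_carrier S) C" using C by (simp add: mcong_def)
  define T0 where "T0 = qmon S C"
  define Z where "Z = monoid_ring T0"
  define \<psi>' where "\<psi>' i X = \<psi> i (SOME x. x \<in> X)" for i X
  have T0: "comm_monoid_zero T0" unfolding T0_def qmon_def by (rule quot_cmz[OF S C])
  interpret Z: cring Z unfolding Z_def by (rule monoid_ring_cring[OF T0])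
  have ch': "\<And>i. i \<in> I \<Longrightarrow> char T0 (R i) (\<psi>' i)"
    unfolding T0_def \<psi>'_def using char_quot(1)[OF S C ch resp] by blast
  have cl: "\<And>i a. i \<in> I \<Longrightarrow> a \<in> S_carrier S \<Longrightarrow> \<psi>' i (cls C a) = \<psi> i a"
    unfolding \<psi>'_def using char_quot(2)[OF S C ch resp] by blast
  define h where "h i = lin (R i) (\<psi>' i)" for i
  have hom: "\<And>i. i \<in> I \<Longrightarrow> h i \<in> ring_hom Z (R i)"
  proof -
    fix i assume i: "i \<in> I"
    interpret Ri: cring "R i" using ch'[OF i] by (simp add: char_def)
    show "h i \<in> ring_hom Z (R i)" unfolding h_def Z_def
      by (rule Ri.lin_ring_hom[OF T0]) (use ch'[OF i] in \<open>auto simp: char_def\<close>)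
  qed
  define K where "K = {\<kappa> \<in> carrier Z. \<forall>i\<in>I. h i \<kappa> = \<zero>\<^bsub>R i\<^esub>}"
  have K: "ideal K Z"
  proof (cases "I = {}")
    case True
    hence "K = carrier Z" by (simp add: K_def)
    thus ?thesis using Z.oneideal by simp
  next
    case False
    have "K = \<Inter> ((\<lambda>i. a_kernel Z (R i) (h i)) ` I)"
      using False by (auto simp: K_def a_kernel_def')
    moreover have "ideal (\<Inter> ((\<lambda>i. a_kernel Z (R i) (h i)) ` I)) Z"
    proof (rule Z.i_Intersect)
      fix J assume "J \<in> (\<lambda>i. a_kernel Z (R i) (h i)) ` I"
      then obtain i where i: "i \<in> I" "J = a_kernel Z (R i) (h i)" by auto
      interpret Ri: cring "R i" using ch'[OF i(1)] by (simp add: char_def)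
      interpret hh: ring_hom_ring Z "R i" "h i" by (rule ring_hom_ringI2[OF Z.ring_axioms Ri.ring_axioms hom[OF i(1)]])
      show "ideal J Z" using hh.kernel_is_ideal i by simp
    qed (use False in auto)
    ultimately show ?thesis by simp
  qed
  interpret K: ideal K Z by (rule K)
  define Q' where "Q' = Z Quot K"
  have cQ': "cring Q'" unfolding Q'_def by (rule K.quotient_is_cring[OF Z.is_cring])
  define \<iota> :: "('a set \<Rightarrow> int) set \<Rightarrow> ('a set \<Rightarrow> int) set" where "\<iota> c = c" for c
  have carQ: "carrier Q' = (\<lambda>x. K +>\<^bsub>Z\<^esub> x) ` carrier Z"
    unfolding Q'_def FactRing_def by (auto simp: A_RCOSETS_def')
  have cos_eq: "\<And>x y. x \<in> carrier Z \<Longrightarrow> y \<in> K +>\<^bsub>Z\<^esub> x \<Longrightarrow> K +>\<^bsub>Z\<^esub> x = K +>\<^bsub>Z\<^esub> y"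
    by (rule K.a_repr_independence')
  have inj: "inj_on \<iota> (carrier Q')" by (simp add: inj_on_def \<iota>_def)
  define R' where "R' = image_ring \<iota> Q'"
  have iso: "\<iota> \<in> ring_iso Q' R'" unfolding R'_def by (rule inj_imp_image_ring_iso[OF inj])
  have cR': "cring R'"
  proof -
    have "cring (R'\<lparr>zero := \<iota> \<zero>\<^bsub>Q'\<^esub>\<rparr>)" by (rule cring.ring_iso_imp_img_cring[OF cQ' iso])
    moreover have "R'\<lparr>zero := \<iota> \<zero>\<^bsub>Q'\<^esub>\<rparr> = R'" unfolding R'_def by (simp add: image_ring_zero)
    ultimately show ?thesis by simp
  qed
  define H where "H x = \<iota> (K +>\<^bsub>Z\<^esub> x)" for x
  have Hhom: "H \<in> ring_hom Z R'"
  proof -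
    have "\<iota> \<circ> (\<lambda>x. K +>\<^bsub>Z\<^esub> x) \<in> ring_hom Z R'"
      using ring_hom_trans[OF K.rcos_ring_hom] iso unfolding Q'_def ring_iso_def by auto
    thus ?thesis by (simp add: H_def[abs_def] comp_def)
  qed
  have Heq: "\<And>a b. a \<in> carrier Z \<Longrightarrow> b \<in> carrier Z \<Longrightarrow> H a = H b \<longleftrightarrow> (\<forall>i\<in>I. h i a = h i b)"
  proof -
    fix a b assume a: "a \<in> carrier Z" and b: "b \<in> carrier Z"
    have "H a = H b \<longleftrightarrow> K +>\<^bsub>Z\<^esub> a = K +>\<^bsub>Z\<^esub> b"
      using inj a b carQ unfolding H_def by (auto dest: inj_onD)
    also have "\<dots> \<longleftrightarrow> a \<ominus>\<^bsub>Z\<^esub> b \<in> K"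
    proof
      assume "K +>\<^bsub>Z\<^esub> a = K +>\<^bsub>Z\<^esub> b"
      hence "a \<in> K +>\<^bsub>Z\<^esub> b" using K.a_rcos_self[OF a] by simp
      thus "a \<ominus>\<^bsub>Z\<^esub> b \<in> K" using K.a_rcos_module_minus[OF Z.ring_axioms b a] by simp
    next
      assume "a \<ominus>\<^bsub>Z\<^esub> b \<in> K"
      hence "a \<in> K +>\<^bsub>Z\<^esub> b" using K.a_rcos_module_minus[OF Z.ring_axioms b a] by simp
      thus "K +>\<^bsub>Z\<^esub> a = K +>\<^bsub>Z\<^esub> b" using cos_eq[OF b] by simp
    qed
    also have "\<dots> \<longleftrightarrow> (\<forall>i\<in>I. h i a = h i b)"
    proof -
      have "h i (a \<ominus>\<^bsub>Z\<^esub> b) = \<zero>\<^bsub>R i\<^esub> \<longleftrightarrow> h i a = h i b" if i: "i \<in> I" for i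
      proof -
        interpret Ri: cring "R i" using ch'[OF i] by (simp add: char_def)
        interpret hh: ring_hom_cring Z "R i" "h i"
          by (intro ring_hom_cring.intro ring_hom_cring_axioms.intro Z.is_cring Ri.is_cring hom[OF i])
        have nb: "\<ominus>\<^bsub>Z\<^esub> b \<in> carrier Z" using b by (rule Z.a_inv_closed)
        have "h i (a \<ominus>\<^bsub>Z\<^esub> b) = h i (a \<oplus>\<^bsub>Z\<^esub> (\<ominus>\<^bsub>Z\<^esub> b))" by (simp only: Z.minus_eq)
        also have "\<dots> = h i a \<oplus>\<^bsub>R i\<^esub> h i (\<ominus>\<^bsub>Z\<^esub> b)" by (rule hh.hom_add[OF a nb])
        also have "\<dots> = h i a \<oplus>\<^bsub>R i\<^esub> (\<ominus>\<^bsub>R i\<^esub> h i b)" using hh.hom_a_inv[OF b] by simp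
        also have "\<dots> = h i a \<ominus>\<^bsub>R i\<^esub> h i b" by (simp only: Ri.minus_eq)
        finally have e: "h i (a \<ominus>\<^bsub>Z\<^esub> b) = h i a \<ominus>\<^bsub>R i\<^esub> h i b" .
        show ?thesis unfolding e by (rule Ri.minus_zero_iff[OF hh.hom_closed[OF a] hh.hom_closed[OF b]])
      qed
      moreover have "a \<ominus>\<^bsub>Z\<^esub> b \<in> carrier Z" using a b by (rule Z.minus_closed)
      ultimately show ?thesis unfolding K_def by blast
    qed
    finally show "H a = H b \<longleftrightarrow> (\<forall>i\<in>I. h i a = h i b)" .
  qed
  have Q: "S_carrier T0 = S_carrier S // C" by (simp add: T0_def qmon_simps)
  define \<phi> where "\<phi> X = H (basis_el X)" for X
  have Hc: "\<And>x. x \<in> carrier Z \<Longrightarrow> H x \<in> carrier R'" using Hhom by (rule ring_hom_closed)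
  have bc: "\<And>X. X \<in> S_carrier S // C \<Longrightarrow> basis_el X \<in> carrier Z"
    unfolding Z_def using Q basis_carrier by metis
  have linH: "\<And>\<kappa>. \<kappa> \<in> carrier Z \<Longrightarrow> lin R' \<phi> \<kappa> = H \<kappa>"
    using lin_hom[OF T0 cR' Hhom[unfolded Z_def]] unfolding Z_def \<phi>_def[abs_def] by (simp add: comp_def)
  have hbasis: "\<And>i X. i \<in> I \<Longrightarrow> X \<in> S_carrier S // C \<Longrightarrow> h i (basis_el X) = \<psi>' i X"
  proof -
    fix i X assume i: "i \<in> I" and X: "X \<in> S_carrier S // C"
    interpret Ri: cring "R i" using ch'[OF i] by (simp add: char_def)
    have "\<psi>' i X \<in> carrier (R i)" using ch'[OF i] X Q by (auto simp: char_def)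
    thus "h i (basis_el X) = \<psi>' i X" unfolding h_def by (rule Ri.lin_basis)
  qed
  have Sc: "S_one S \<in> S_carrier S" "S_zero S \<in> S_carrier S"
    using S by (auto simp: comm_monoid_zero_def)
  define \<sigma> where "\<sigma> \<kappa> Y \<longleftrightarrow> fin_comb (S_carrier S // C) \<kappa> \<and> Y \<in> S_carrier S // C \<and>
     finsum R' (\<lambda>x. add_pow R' (\<kappa> x) (\<phi> x)) {x. \<kappa> x \<noteq> 0} = \<phi> Y" for \<kappa> Y
  have qs: "S_carrier (quot_with S C \<sigma>) = S_carrier S // C" "S_one (quot_with S C \<sigma>) = cls C (S_one S)"
    "S_zero (quot_with S C \<sigma>) = cls C (S_zero S)" "S_sum (quot_with S C \<sigma>) = \<sigma>"
    "S_mult (quot_with S C \<sigma>) = S_mult T0"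
    by (simp_all add: quot_with_def T0_def qmon_def)
  have sesq: "is_sesquiad (quot_with S C \<sigma>)"
    unfolding is_sesquiad_def
  proof (intro conjI exI[of _ R'] exI[of _ \<phi>])
    show "comm_monoid_zero (quot_with S C \<sigma>)" by (rule quot_cmz[OF S C])
    show "cring R'" by (rule cR')
    show "\<phi> \<in> S_carrier (quot_with S C \<sigma>) \<rightarrow> carrier R'"
      unfolding qs \<phi>_def using bc Hc by auto
    show "inj_on \<phi> (S_carrier (quot_with S C \<sigma>))"
    proof (rule inj_onI, unfold qs)
      fix X Y assume X: "X \<in> S_carrier S // C" and Y: "Y \<in> S_carrier S // C" and e: "\<phi> X = \<phi> Y"
      obtain a b where ab: "a \<in> S_carrier S" "X = cls C a" "b \<in> S_carrier S" "Y = cls C b"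
        using X Y by (metis quot_repr)
      have "\<forall>i\<in>I. h i (basis_el X) = h i (basis_el Y)" using Heq[OF bc[OF X] bc[OF Y]] e by (simp add: \<phi>_def)
      hence "\<forall>i\<in>I. \<psi> i a = \<psi> i b" using hbasis X Y ab cl by auto
      hence "(a, b) \<in> C" using sep ab by blast
      thus "X = Y" using ab eq by (simp add: cls_eq_iff)
    qed
    show "\<phi> (S_one (quot_with S C \<sigma>)) = \<one>\<^bsub>R'\<^esub>"
    proof -
      have "basis_el (S_one (quot_with S C \<sigma>)) = \<one>\<^bsub>Z\<^esub>" by (simp add: qs Z_def mr_simps T0_def qmon_simps)
      thus ?thesis unfolding \<phi>_def using ring_hom_one[OF Hhom] by simp
    qed
    show "\<phi> (S_zero (quot_with S C \<sigma>)) = \<zero>\<^bsub>R'\<^esub>"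
    proof -
      have z: "cls C (S_zero S) \<in> S_carrier S // C" using Sc(2) by (rule cls_in_quot)
      have "H (basis_el (cls C (S_zero S))) = H \<zero>\<^bsub>Z\<^esub>"
      proof (subst Heq[OF bc[OF z] Z.zero_closed], intro ballI)
        fix i assume i: "i \<in> I"
        interpret Ri: cring "R i" using ch'[OF i] by (simp add: char_def)
        have "h i \<zero>\<^bsub>Z\<^esub> = \<zero>\<^bsub>R i\<^esub>" by (rule ring_hom_zero[OF hom[OF i] Z.ring_axioms Ri.ring_axioms])
        moreover have "h i (basis_el (cls C (S_zero S))) = \<zero>\<^bsub>R i\<^esub>"
          using hbasis[OF i z] cl[OF i Sc(2)] ch[OF i] by (simp add: char_def)
        ultimately show "h i (basis_el (cls C (S_zero S))) = h i \<zero>\<^bsub>Z\<^esub>" by simp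
      qed
      also have "\<dots> = \<zero>\<^bsub>R'\<^esub>" by (rule ring_hom_zero[OF Hhom Z.ring_axioms cring.axioms(1)[OF cR']])
      finally show ?thesis unfolding \<phi>_def qs .
    qed
    show "\<forall>x\<in>S_carrier (quot_with S C \<sigma>). \<forall>y\<in>S_carrier (quot_with S C \<sigma>).
        \<phi> (S_mult (quot_with S C \<sigma>) x y) = \<phi> x \<otimes>\<^bsub>R'\<^esub> \<phi> y"
    proof (intro ballI, unfold qs)
      fix X Y assume X: "X \<in> S_carrier S // C" and Y: "Y \<in> S_carrier S // C"
      have "basis_el (S_mult T0 X Y) = basis_el X \<otimes>\<^bsub>Z\<^esub> basis_el Y"
        unfolding Z_def by (rule basis_mult[symmetric]) (use X Y Q in auto)
      thus "\<phi> (S_mult T0 X Y) = \<phi> X \<otimes>\<^bsub>R'\<^esub> \<phi> Y"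
        unfolding \<phi>_def using ring_hom_mult[OF Hhom bc[OF X] bc[OF Y]] by simp
    qed
    show "\<forall>k a. S_sum (quot_with S C \<sigma>) k a \<longleftrightarrow> fin_comb (S_carrier (quot_with S C \<sigma>)) k \<and>
        a \<in> S_carrier (quot_with S C \<sigma>) \<and>
        finsum R' (\<lambda>x. add_pow R' (k x) (\<phi> x)) {x. k x \<noteq> 0} = \<phi> a"
      unfolding qs \<sigma>_def by simp
  qed
  have hom2: "sesq_hom S (quot_with S C \<sigma>) (cls C)"
    unfolding sesq_hom_def
  proof (intro conjI allI impI ballI)
    show "cls C \<in> S_carrier S \<rightarrow> S_carrier (quot_with S C \<sigma>)" unfolding qs by (auto intro: cls_in_quot)
    show "cls C (S_one S) = S_one (quot_with S C \<sigma>)" "cls C (S_zero S) = S_zero (quot_with S C \<sigma>)"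
      by (simp_all add: qs)
  next
    fix x y assume "x \<in> S_carrier S" "y \<in> S_carrier S"
    thus "cls C (S_mult S x y) = S_mult (quot_with S C \<sigma>) (cls C x) (cls C y)"
      using quot_mult_cls[OF S C] by simp
  next
    fix k a assume sk: "S_sum S k a"
    have fk: "finite (supp k)" "supp k \<subseteq> S_carrier S" and a: "a \<in> S_carrier S"
      and lk: "\<forall>i\<in>I. lin (R i) (\<psi> i) k = \<psi> i a"
      using sums[OF sk] by (auto simp: fin_comb_def supp_def)
    let ?\<kappa> = "push_comb (cls C) k"
    have sk': "supp ?\<kappa> \<subseteq> S_carrier S // C" using supp_push[OF fk(1), of "cls C"] fk(2) by (auto intro: cls_in_quot)
    have fk': "finite (supp ?\<kappa>)" using supp_push[OF fk(1), of "cls C"] fk(1) by (auto intro: finite_subset)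
    have kc: "?\<kappa> \<in> carrier Z" using sk' fk' Q by (simp add: Z_def mr_carrier)
    have ca: "cls C a \<in> S_carrier S // C" using a by (rule cls_in_quot)
    have "H ?\<kappa> = H (basis_el (cls C a))"
    proof (subst Heq[OF kc bc[OF ca]], intro ballI)
      fix i assume i: "i \<in> I"
      interpret Ri: cring "R i" using ch'[OF i] by (simp add: char_def)
      have "h i ?\<kappa> = lin (R i) (\<psi>' i \<circ> cls C) k"
        unfolding h_def
        by (rule Ri.lin_push[OF fk(1,2), of _ "S_carrier S // C"]) (use ch'[OF i] Q in \<open>auto simp: char_def intro: cls_in_quot\<close>)
      also have "\<dots> = lin (R i) (\<psi> i) k" using fk(2) cl[OF i] by (intro lin_cong) auto
      also have "\<dots> = \<psi> i a" using lk i by simp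
      also have "\<dots> = h i (basis_el (cls C a))" using hbasis[OF i ca] cl[OF i a] by simp
      finally show "h i ?\<kappa> = h i (basis_el (cls C a))" .
    qed
    hence "lin R' \<phi> ?\<kappa> = \<phi> (cls C a)" using linH[OF kc] by (simp add: \<phi>_def)
    thus "S_sum (quot_with S C \<sigma>) ?\<kappa> (cls C a)"
      unfolding qs \<sigma>_def using sk' fk' ca by (simp add: fin_comb_def supp_def lin_def)
  qed
  show ?thesis unfolding is_congruence_def using C sesq hom2 by (auto simp: mcong_def)
qed

lemma char_quot_with: "char (quot_with S C \<sigma>) R \<psi> = char (qmon S C) R \<psi>"
  by (simp add: char_def qmon_def quot_with_def)

lemma ker_mcong:
  assumes S: "comm_monoid_zero S" and ch: "\<And>i. i \<in> I \<Longrightarrow> char S (R i) (\<psi> i)"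
  shows "mcong S {(a, b). a \<in> S_carrier S \<and> b \<in> S_carrier S \<and> (\<forall>i\<in>I. \<psi> i a = \<psi> i b)}"
  unfolding mcong_def
proof (intro conjI allI impI)
  show "equiv (S_carrier S) {(a, b). a \<in> S_carrier S \<and> b \<in> S_carrier S \<and> (\<forall>i\<in>I. \<psi> i a = \<psi> i b)}"
    by (auto simp: equiv_def refl_on_def sym_def trans_def)
next
  fix a b c assume ab: "(a, b) \<in> {(a, b). a \<in> S_carrier S \<and> b \<in> S_carrier S \<and> (\<forall>i\<in>I. \<psi> i a = \<psi> i b)}"
    and c: "c \<in> S_carrier S"
  have mc: "S_mult S a c \<in> S_carrier S" "S_mult S b c \<in> S_carrier S"
    using S ab c by (auto simp: comm_monoid_zero_def)
  show "(S_mult S a c, S_mult S b c) \<in> {(a, b). a \<in> S_carrier S \<and> b \<in> S_carrier S \<and> (\<forall>i\<in>I. \<psi> i a = \<psi> i b)}"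
    using ab c mc ch by (auto simp: char_def)
qed

lemma cong_char:
  fixes S :: "'a sesquiad"
  assumes C: "is_congruence S C"
    and fc: "\<And>k a. S_sum S k a \<Longrightarrow> fin_comb (S_carrier S) k \<and> a \<in> S_carrier S"
  shows "\<exists>(R :: ('a set \<Rightarrow> int) set ring) \<psi>. char S R \<psi> \<and>
     (\<forall>a\<in>S_carrier S. \<forall>b\<in>S_carrier S. \<psi> a = \<psi> b \<longleftrightarrow> (a, b) \<in> C) \<and>
     (\<forall>k a. S_sum S k a \<longrightarrow> lin R \<psi> k = \<psi> a)"
proof -
  have eq: "equiv (S_carrier S) C" using C by (simp add: is_congruence_def)
  obtain \<sigma> where sq: "is_sesquiad (quot_with S C \<sigma>)" and hm: "sesq_hom S (quot_with S C \<sigma>) (cls C)"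
    using C by (auto simp: is_congruence_def)
  let ?T = "quot_with S C \<sigma>"
  from sq obtain R :: "('a set \<Rightarrow> int) set ring" and \<phi> where
    cR: "cring R" and ph: "\<phi> \<in> S_carrier ?T \<rightarrow> carrier R" and inj: "inj_on \<phi> (S_carrier ?T)"
    and p1: "\<phi> (S_one ?T) = \<one>\<^bsub>R\<^esub>" and p0: "\<phi> (S_zero ?T) = \<zero>\<^bsub>R\<^esub>"
    and pm: "\<forall>x\<in>S_carrier ?T. \<forall>y\<in>S_carrier ?T. \<phi> (S_mult ?T x y) = \<phi> x \<otimes>\<^bsub>R\<^esub> \<phi> y"
    and ps: "\<forall>k a. S_sum ?T k a \<longleftrightarrow> fin_comb (S_carrier ?T) k \<and> a \<in> S_carrier ?T \<and>
           finsum R (\<lambda>x. add_pow R (k x) (\<phi> x)) {x. k x \<noteq> 0} = \<phi> a"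
    unfolding is_sesquiad_def by blast
  interpret R: cring R by (rule cR)
  have qc: "S_carrier ?T = S_carrier S // C" by (simp add: quot_with_def)
  have hc: "\<And>a. a \<in> S_carrier S \<Longrightarrow> cls C a \<in> S_carrier ?T" using qc by (auto intro: cls_in_quot)
  have h1: "cls C (S_one S) = S_one ?T" and h0: "cls C (S_zero S) = S_zero ?T"
    and hmul: "\<And>x y. x \<in> S_carrier S \<Longrightarrow> y \<in> S_carrier S \<Longrightarrow> cls C (S_mult S x y) = S_mult ?T (cls C x) (cls C y)"
    and hs: "\<And>k a. S_sum S k a \<Longrightarrow> S_sum ?T (push_comb (cls C) k) (cls C a)"
    using hm by (auto simp: sesq_hom_def)
  show ?thesis
  proof (intro exI[of _ R] exI[of _ "\<phi> \<circ> cls C"] conjI ballI allI impI)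
    show "char S R (\<phi> \<circ> cls C)"
      unfolding char_def using cR ph hc p1 p0 h1 h0 pm hmul by (auto simp: Pi_iff)
  next
    fix a b assume a: "a \<in> S_carrier S" and b: "b \<in> S_carrier S"
    have "(\<phi> \<circ> cls C) a = (\<phi> \<circ> cls C) b \<longleftrightarrow> cls C a = cls C b"
      using inj hc[OF a] hc[OF b] by (auto dest: inj_onD)
    also have "\<dots> \<longleftrightarrow> (a, b) \<in> C" using eq a b by (rule cls_eq_iff)
    finally show "(\<phi> \<circ> cls C) a = (\<phi> \<circ> cls C) b \<longleftrightarrow> (a, b) \<in> C" .
  next
    fix k a assume sk: "S_sum S k a"
    have fk: "finite (supp k)" "supp k \<subseteq> S_carrier S" and a: "a \<in> S_carrier S"
      using fc[OF sk] by (auto simp: fin_comb_def supp_def)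
    have "lin R \<phi> (push_comb (cls C) k) = \<phi> (cls C a)"
      using ps hs[OF sk] by (simp add: lin_def)
    moreover have "lin R \<phi> (push_comb (cls C) k) = lin R (\<phi> \<circ> cls C) k"
      by (rule R.lin_push[OF fk]) (use ph hc in auto)
    ultimately show "lin R (\<phi> \<circ> cls C) k = (\<phi> \<circ> cls C) a" by simp
  qed
qed


context cring begin

lemma lin_zero_fun: "lin R v (\<lambda>_. 0) = \<zero>"
  by (simp add: lin_def)

lemma lin_neg:
  assumes "finite (supp l)" "v \<in> D \<rightarrow> carrier R" "supp l \<subseteq> D"
  shows "lin R v (\<lambda>z. - l z) = \<ominus> lin R v l"
proof -
  have s: "supp (\<lambda>z. - l z) = supp l" by (simp add: supp_def)
  have c1: "lin R v (\<lambda>z. - l z) \<in> carrier R" "lin R v l \<in> carrier R"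
    using assms s by (auto intro!: lin_closed)
  have "lin R v (\<lambda>z. - l z) \<oplus> lin R v l = lin R v (\<lambda>z. - l z + l z)"
    using assms s by (intro lin_add[symmetric]) auto
  also have "\<dots> = \<zero>" by (simp add: lin_zero_fun)
  finally show ?thesis using minus_equality[OF _ c1(2) c1(1)] by simp
qed

lemma lin_diff:
  assumes "finite (supp k)" "finite (supp l)" "v \<in> D \<rightarrow> carrier R" "supp k \<subseteq> D" "supp l \<subseteq> D"
  shows "lin R v (\<lambda>z. k z - l z) = lin R v k \<ominus> lin R v l"
proof -
  have "lin R v (\<lambda>z. k z + - l z) = lin R v k \<oplus> lin R v (\<lambda>z. - l z)"
    using assms by (intro lin_add) (auto simp: supp_def)
  thus ?thesis using assms by (simp add: lin_neg minus_eq)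
qed

lemma cong_ideal_lin:
  fixes A :: "'s sesquiad"
  assumes S: "comm_monoid_zero A" and psi: "\<psi> \<in> S_carrier A \<rightarrow> carrier R"
    and mul: "\<And>x y. x \<in> S_carrier A \<Longrightarrow> y \<in> S_carrier A \<Longrightarrow> \<psi> (S_mult A x y) = \<psi> x \<otimes> \<psi> y"
    and one: "\<psi> (S_one A) = \<one>" and zero: "\<psi> (S_zero A) = \<zero>"
    and fc: "\<And>k a. S_sum A k a \<Longrightarrow> fin_comb (S_carrier A) k \<and> a \<in> S_carrier A"
    and sums: "\<And>k a. S_sum A k a \<Longrightarrow> lin R \<psi> k = \<psi> a"
    and resp: "\<And>a b. (a, b) \<in> C0 \<Longrightarrow> \<psi> a = \<psi> b"
    and C0: "C0 \<subseteq> S_carrier A \<times> S_carrier A"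
    and k: "\<kappa> \<in> cong_ideal A C0"
  shows "lin R \<psi> \<kappa> = \<zero>"
proof -
  let ?Z = "monoid_ring A"
  interpret Z: cring ?Z by (rule monoid_ring_cring[OF S])
  have hom: "lin R \<psi> \<in> ring_hom ?Z R" by (rule lin_ring_hom[OF S psi mul one])
  interpret hh: ring_hom_ring ?Z R "lin R \<psi>" by (rule ring_hom_ringI2[OF Z.ring_axioms ring_axioms hom])
  let ?Ker = "a_kernel ?Z R (lin R \<psi>)"
  have Sc: "S_zero A \<in> S_carrier A" using S by (simp add: comm_monoid_zero_def)
  have bl: "\<And>a. a \<in> S_carrier A \<Longrightarrow> lin R \<psi> (basis_el a) = \<psi> a"
    using psi by (intro lin_basis) auto
  have fb: "\<And>a. finite (supp (basis_el a))" by (simp add: supp_basis)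
  have gens: "{basis_el (S_zero A)} \<union> {(\<lambda>z. k z - basis_el a z) | k a. S_sum A k a} \<union>
      {(\<lambda>z. basis_el a z - basis_el b z) | a b. (a, b) \<in> C0} \<subseteq> ?Ker"
  proof (intro Un_least subsetI)
    fix x assume "x \<in> {basis_el (S_zero A)}"
    moreover have "basis_el (S_zero A) \<in> ?Ker"
      unfolding a_kernel_def' using basis_carrier[OF Sc] bl[OF Sc] zero by simp
    ultimately show "x \<in> ?Ker" by simp
  next
    fix x assume "x \<in> {(\<lambda>z. k z - basis_el a z) | k a. S_sum A k a}"
    then obtain k a where x: "x = (\<lambda>z. k z - basis_el a z)" and sk: "S_sum A k a" by auto
    have fk: "finite (supp k)" "supp k \<subseteq> S_carrier A" and a: "a \<in> S_carrier A"
      using fc[OF sk] by (auto simp: fin_comb_def supp_def)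
    have "lin R \<psi> x = lin R \<psi> k \<ominus> lin R \<psi> (basis_el a)"
      unfolding x by (rule lin_diff[OF fk(1) fb psi fk(2)]) (use a in \<open>simp add: supp_basis\<close>)
    also have "\<dots> = \<zero>" using sums[OF sk] bl[OF a] funcset_mem[OF psi a] by (simp add: minus_eq r_neg)
    finally have "lin R \<psi> x = \<zero>" .
    moreover have "x \<in> carrier ?Z" unfolding x mr_carrier
    proof
      have "supp (\<lambda>z. k z - basis_el a z) \<subseteq> supp k \<union> {a}" by (auto simp: supp_def basis_el_def)
      thus "finite (supp (\<lambda>z. k z - basis_el a z))" "supp (\<lambda>z. k z - basis_el a z) \<subseteq> S_carrier A"
        using fk a by (auto intro: finite_subset)
    qed
    ultimately show "x \<in> ?Ker" unfolding a_kernel_def' by blast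
  next
    fix x assume "x \<in> {(\<lambda>z. basis_el a z - basis_el b z) | a b. (a, b) \<in> C0}"
    then obtain a b where x: "x = (\<lambda>z. basis_el a z - basis_el b z)" and ab: "(a, b) \<in> C0" by auto
    have a: "a \<in> S_carrier A" "b \<in> S_carrier A" using ab C0 by auto
    have "lin R \<psi> x = lin R \<psi> (basis_el a) \<ominus> lin R \<psi> (basis_el b)"
      unfolding x by (rule lin_diff[OF fb fb psi]) (use a in \<open>simp_all add: supp_basis\<close>)
    also have "\<dots> = \<zero>" using resp[OF ab] bl[OF a(1)] bl[OF a(2)] funcset_mem[OF psi a(2)] by (simp add: minus_eq r_neg)
    finally have "lin R \<psi> x = \<zero>" .
    moreover have "x \<in> carrier ?Z" unfolding x mr_carrier
    proof
      have "supp (\<lambda>z. basis_el a z - basis_el b z) \<subseteq> {a, b}" by (auto simp: supp_def basis_el_def)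
      thus "finite (supp (\<lambda>z. basis_el a z - basis_el b z))" "supp (\<lambda>z. basis_el a z - basis_el b z) \<subseteq> S_carrier A"
        using a by (auto intro: finite_subset)
    qed
    ultimately show "x \<in> ?Ker" unfolding a_kernel_def' by blast
  qed
  have "cong_ideal A C0 \<subseteq> ?Ker"
    unfolding cong_ideal_def by (rule Z.genideal_minimal[OF hh.kernel_is_ideal gens])
  hence "\<kappa> \<in> ?Ker" using k by blast
  thus ?thesis unfolding a_kernel_def' by blast
qed

end


lemma qsum_lin:
  fixes A :: "'a sesquiad"
  assumes S: "comm_monoid_zero A" and ch: "char A R \<psi>"
    and fc: "\<And>k a. S_sum A k a \<Longrightarrow> fin_comb (S_carrier A) k \<and> a \<in> S_carrier A"
    and sums: "\<And>k a. S_sum A k a \<Longrightarrow> lin R \<psi> k = \<psi> a"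
    and C0: "equiv (S_carrier A) C0" and resp: "\<And>a b. (a, b) \<in> C0 \<Longrightarrow> \<psi> a = \<psi> b"
    and qs: "quot_sum A C0 \<kappa> Y"
  shows "lin R (\<lambda>X. \<psi> (SOME x. x \<in> X)) \<kappa> = \<psi> (SOME x. x \<in> Y)"
proof -
  interpret R: cring R using ch by (simp add: char_def)
  have psi: "\<psi> \<in> S_carrier A \<rightarrow> carrier R" using ch by (simp add: char_def)
  obtain k a where fk: "fin_comb (S_carrier A) k" and aY: "a \<in> Y" and pk: "push_comb (cls C0) k = \<kappa>"
    and ki: "(\<lambda>z. k z - basis_el a z) \<in> cong_ideal A C0" and Y: "Y \<in> S_carrier A // C0"
    using qs unfolding quot_sum_def by blast
  have fk': "finite (supp k)" "supp k \<subseteq> S_carrier A" using fk by (auto simp: fin_comb_def supp_def)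
  obtain b where b: "b \<in> S_carrier A" "Y = cls C0 b" using Y by (metis quot_repr)
  have ba: "(b, a) \<in> C0" using aY b by (simp add: cls_def)
  have a: "a \<in> S_carrier A" using ba C0 by (auto simp: equiv_def refl_on_def)
  have Ya: "Y = cls C0 a" using b ba C0 by (simp add: cls_eq_iff a)
  have C0s: "C0 \<subseteq> S_carrier A \<times> S_carrier A" using C0 by (auto simp: equiv_def refl_on_def)
  have cl: "\<And>x. x \<in> S_carrier A \<Longrightarrow> \<psi> (SOME y. y \<in> cls C0 x) = \<psi> x"
    using some_cls[OF C0] resp by (metis)
  have "lin R \<psi> (\<lambda>z. k z - basis_el a z) = \<zero>\<^bsub>R\<^esub>"
  proof -
    have m: "\<And>x y. x \<in> S_carrier A \<Longrightarrow> y \<in> S_carrier A \<Longrightarrow> \<psi> (S_mult A x y) = \<psi> x \<otimes>\<^bsub>R\<^esub> \<psi> y"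
      and o: "\<psi> (S_one A) = \<one>\<^bsub>R\<^esub>" and z: "\<psi> (S_zero A) = \<zero>\<^bsub>R\<^esub>" using ch by (auto simp: char_def)
    show ?thesis by (rule R.cong_ideal_lin[OF S psi m o z fc sums resp C0s ki])
  qed
  moreover have "lin R \<psi> (\<lambda>z. k z - basis_el a z) = lin R \<psi> k \<ominus>\<^bsub>R\<^esub> lin R \<psi> (basis_el a)"
    by (rule R.lin_diff[OF fk'(1) _ psi fk'(2)]) (use a in \<open>auto simp: supp_basis\<close>)
  moreover have "lin R \<psi> (basis_el a) = \<psi> a" using psi a by (intro R.lin_basis) auto
  moreover have "lin R \<psi> k \<in> carrier R" using fk' psi by (intro R.lin_closed) auto
  ultimately have lk: "lin R \<psi> k = \<psi> a" using R.minus_zero_iff funcset_mem[OF psi a] by simp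
  have "lin R (\<lambda>X. \<psi> (SOME x. x \<in> X)) \<kappa> = lin R ((\<lambda>X. \<psi> (SOME x. x \<in> X)) \<circ> cls C0) k"
    unfolding pk[symmetric]
  proof (rule R.lin_push[OF fk', of _ "S_carrier A // C0"])
    show "cls C0 \<in> S_carrier A \<rightarrow> S_carrier A // C0" by (auto intro: cls_in_quot)
    show "(\<lambda>X. \<psi> (SOME x. x \<in> X)) \<in> S_carrier A // C0 \<rightarrow> carrier R"
    proof
      fix X assume "X \<in> S_carrier A // C0"
      then obtain x where "x \<in> S_carrier A" "X = cls C0 x" by (metis quot_repr)
      thus "\<psi> (SOME x. x \<in> X) \<in> carrier R" using cl psi by auto
    qed
  qed
  also have "\<dots> = lin R \<psi> k" using fk'(2) cl by (intro lin_cong) auto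
  also have "\<dots> = \<psi> (SOME x. x \<in> Y)" using lk cl[OF a] Ya by simp
  finally show ?thesis .
qed

lemma sum_to_quot:
  fixes A :: "'a sesquiad"
  assumes S: "comm_monoid_zero A"
    and fc: "\<And>k a. S_sum A k a \<Longrightarrow> fin_comb (S_carrier A) k \<and> a \<in> S_carrier A"
    and C: "equiv (S_carrier A) C" and sk: "S_sum A k a"
  shows "quot_sum A C (push_comb (cls C) k) (cls C a)"
proof -
  interpret Z: cring "monoid_ring A" by (rule monoid_ring_cring[OF S])
  have fk: "finite (supp k)" "supp k \<subseteq> S_carrier A" and a: "a \<in> S_carrier A"
    using fc[OF sk] by (auto simp: fin_comb_def supp_def)
  have sp: "supp (push_comb (cls C) k) \<subseteq> S_carrier A // C"
    using supp_push[OF fk(1), of "cls C"] fk(2) by (auto intro: cls_in_quot)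
  have fp: "finite (supp (push_comb (cls C) k))" using supp_push[OF fk(1), of "cls C"] fk(1) by (auto intro: finite_subset)
  have Sc: "S_zero A \<in> S_carrier A" using S by (simp add: comm_monoid_zero_def)
  have diffc: "\<And>k a. finite (supp k) \<Longrightarrow> supp k \<subseteq> S_carrier A \<Longrightarrow> a \<in> S_carrier A \<Longrightarrow>
      (\<lambda>z. k z - basis_el a z) \<in> carrier (monoid_ring A)"
  proof -
    fix k a assume f: "finite (supp k)" "supp k \<subseteq> S_carrier A" "a \<in> S_carrier A"
    have "supp (\<lambda>z. k z - basis_el a z) \<subseteq> supp k \<union> {a}" by (auto simp: supp_def basis_el_def)
    thus "(\<lambda>z. k z - basis_el a z) \<in> carrier (monoid_ring A)" using f by (auto simp: mr_carrier intro: finite_subset)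
  qed
  have gens: "{basis_el (S_zero A)} \<union> {(\<lambda>z. k z - basis_el a z) | k a. S_sum A k a} \<union>
      {(\<lambda>z. basis_el a z - basis_el b z) | a b. (a, b) \<in> C} \<subseteq> carrier (monoid_ring A)"
  proof (intro Un_least subsetI)
    fix x assume "x \<in> {basis_el (S_zero A)}" thus "x \<in> carrier (monoid_ring A)" using basis_carrier[OF Sc] by simp
  next
    fix x assume "x \<in> {(\<lambda>z. k z - basis_el a z) | k a. S_sum A k a}"
    then obtain k a where x: "x = (\<lambda>z. k z - basis_el a z)" and sk: "S_sum A k a" by blast
    have "finite (supp k)" "supp k \<subseteq> S_carrier A" "a \<in> S_carrier A"
      using fc[OF sk] by (auto simp: fin_comb_def supp_def)
    thus "x \<in> carrier (monoid_ring A)" unfolding x by (rule diffc)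
  next
    fix x assume "x \<in> {(\<lambda>z. basis_el a z - basis_el b z) | a b. (a, b) \<in> C}"
    then obtain a b where x: "x = (\<lambda>z. basis_el a z - basis_el b z)" and ab: "(a, b) \<in> C" by blast
    have "a \<in> S_carrier A" "b \<in> S_carrier A" using ab C by (auto simp: equiv_def refl_on_def)
    moreover have "finite (supp (basis_el a))" by (simp add: supp_basis)
    ultimately show "x \<in> carrier (monoid_ring A)" unfolding x using diffc[of "basis_el a" b] by (simp add: supp_basis)
  qed
  have "(\<lambda>z. k z - basis_el a z) \<in> cong_ideal A C"
    using Z.genideal_self[OF gens] sk unfolding cong_ideal_def by blast
  moreover have "a \<in> cls C a" using C a by (auto simp: cls_def equiv_def refl_on_def)
  ultimately show ?thesis unfolding quot_sum_def
    using sp fp fc[OF sk] a by (auto simp: fin_comb_def supp_def intro!: cls_in_quot)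
qed


lemma quot_simps: "S_carrier (quot S C) = S_carrier S // C" "S_one (quot S C) = cls C (S_one S)"
  "S_zero (quot S C) = cls C (S_zero S)" "S_sum (quot S C) = quot_sum S C"
  by (simp_all add: quot_def quot_with_def)

lemma PB:
  fixes A :: "'a sesquiad"
  assumes S: "comm_monoid_zero A"
    and fc: "\<And>k a. S_sum A k a \<Longrightarrow> fin_comb (S_carrier A) k \<and> a \<in> S_carrier A"
    and C: "is_congruence A C" and E: "is_prime_congruence (quot A C) E"
  shows "is_prime_congruence A (spec_map A (cls C) E) \<and> C \<subseteq> spec_map A (cls C) E"
proof -
  let ?Q = "quot A C"
  have mC: "mcong A C" using C by (simp add: is_congruence_def mcong_def)
  have eqC: "equiv (S_carrier A) C" using mC by (simp add: mcong_def)
  have EC: "is_congruence ?Q E" using E by (simp add: is_prime_congruence_def)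
  have eqE: "equiv (S_carrier A // C) E" using EC by (simp add: is_congruence_def quot_simps)
  have fcQ: "\<And>k a. S_sum ?Q k a \<Longrightarrow> fin_comb (S_carrier ?Q) k \<and> a \<in> S_carrier ?Q"
    by (simp add: quot_simps quot_sum_def)
  obtain R :: "('a set set \<Rightarrow> int) set ring" and \<chi> where ch: "char ?Q R \<chi>"
    and sepE: "\<forall>X\<in>S_carrier ?Q. \<forall>Y\<in>S_carrier ?Q. \<chi> X = \<chi> Y \<longleftrightarrow> (X, Y) \<in> E"
    and sumE: "\<forall>k a. S_sum ?Q k a \<longrightarrow> lin R \<chi> k = \<chi> a"
    using cong_char[OF EC fcQ] by blast
  interpret R: cring R using ch by (simp add: char_def)
  have qc: "S_carrier ?Q = S_carrier A // C" by (simp add: quot_simps)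
  have hc: "\<And>a. a \<in> S_carrier A \<Longrightarrow> cls C a \<in> S_carrier ?Q" using qc by (auto intro: cls_in_quot)
  have qm: "\<And>a b. a \<in> S_carrier A \<Longrightarrow> b \<in> S_carrier A \<Longrightarrow> S_mult ?Q (cls C a) (cls C b) = cls C (S_mult A a b)"
    unfolding quot_def by (rule quot_mult_cls[OF S mC])
  have Sc: "S_one A \<in> S_carrier A" "S_zero A \<in> S_carrier A"
    "\<And>x y. x \<in> S_carrier A \<Longrightarrow> y \<in> S_carrier A \<Longrightarrow> S_mult A x y \<in> S_carrier A"
    using S by (auto simp: comm_monoid_zero_def)
  define \<psi> where "\<psi> a = \<chi> (cls C a)" for a
  have chA: "char A R \<psi>"
    unfolding char_def \<psi>_def
  proof (intro conjI ballI)
    show "cring R" by (rule R.is_cring)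
    show "(\<lambda>a. \<chi> (cls C a)) \<in> S_carrier A \<rightarrow> carrier R" using ch hc by (auto simp: char_def)
    show "\<chi> (cls C (S_one A)) = \<one>\<^bsub>R\<^esub>" "\<chi> (cls C (S_zero A)) = \<zero>\<^bsub>R\<^esub>"
      using ch by (simp_all add: char_def quot_simps)
  next
    fix x y assume "x \<in> S_carrier A" "y \<in> S_carrier A"
    thus "\<chi> (cls C (S_mult A x y)) = \<chi> (cls C x) \<otimes>\<^bsub>R\<^esub> \<chi> (cls C y)"
      using ch hc qm[symmetric] by (auto simp: char_def)
  qed
  have E'eq: "spec_map A (cls C) E = {(a, b). a \<in> S_carrier A \<and> b \<in> S_carrier A \<and> (\<forall>i\<in>(UNIV::unit set). \<psi> a = \<psi> b)}"
    using sepE hc by (auto simp: spec_map_def \<psi>_def)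
  have cong: "is_congruence A (spec_map A (cls C) E)"
    unfolding E'eq
  proof (rule MC[where R="\<lambda>_. R" and \<psi>="\<lambda>_. \<psi>"])
    show "comm_monoid_zero A" by (rule S)
    show "mcong A {(a, b). a \<in> S_carrier A \<and> b \<in> S_carrier A \<and> (\<forall>i\<in>(UNIV::unit set). \<psi> a = \<psi> b)}"
      by (rule ker_mcong[OF S]) (rule chA)
    show "\<And>i. i \<in> UNIV \<Longrightarrow> char A R \<psi>" by (rule chA)
  next
    fix k a assume sk: "S_sum A k a"
    have fk: "finite (supp k)" "supp k \<subseteq> S_carrier A" and a: "a \<in> S_carrier A"
      using fc[OF sk] by (auto simp: fin_comb_def supp_def)
    have qs: "quot_sum A C (push_comb (cls C) k) (cls C a)" by (rule sum_to_quot[OF S fc eqC sk])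
    have "lin R \<chi> (push_comb (cls C) k) = lin R (\<chi> \<circ> cls C) k"
      by (rule R.lin_push[OF fk, of _ "S_carrier ?Q"]) (use hc ch in \<open>auto simp: char_def\<close>)
    moreover have "lin R \<chi> (push_comb (cls C) k) = \<chi> (cls C a)" using sumE qs by (simp add: quot_simps)
    ultimately show "fin_comb (S_carrier A) k \<and> a \<in> S_carrier A \<and> (\<forall>i\<in>UNIV. lin R \<psi> k = \<psi> a)"
      using fc[OF sk] by (simp add: \<psi>_def[abs_def] comp_def)
  qed auto
  have prime: "is_prime_congruence A (spec_map A (cls C) E)"
    unfolding is_prime_congruence_def
  proof (intro conjI ballI impI cong)
    show "(S_one A, S_zero A) \<notin> spec_map A (cls C) E"
      using E by (simp add: spec_map_def is_prime_congruence_def quot_simps)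
  next
    fix a b f assume ab: "a \<in> S_carrier A" "b \<in> S_carrier A" "f \<in> S_carrier A"
      and m: "(S_mult A a f, S_mult A b f) \<in> spec_map A (cls C) E"
    have "(S_mult ?Q (cls C a) (cls C f), S_mult ?Q (cls C b) (cls C f)) \<in> E"
      using m ab qm by (simp add: spec_map_def)
    hence "(cls C a, cls C b) \<in> E \<or> (cls C f, S_zero ?Q) \<in> E"
      using E hc ab unfolding is_prime_congruence_def by blast
    thus "(a, b) \<in> spec_map A (cls C) E \<or> (f, S_zero A) \<in> spec_map A (cls C) E"
      using ab Sc by (auto simp: spec_map_def quot_simps)
  qed
  have "C \<subseteq> spec_map A (cls C) E"
  proof
    fix p assume p: "p \<in> C"
    obtain a b where ab: "p = (a, b)" by (cases p)
    have a: "a \<in> S_carrier A" "b \<in> S_carrier A" using p ab eqC by (auto simp: equiv_def refl_on_def)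
    have "cls C a = cls C b" using p ab eqC a by (simp add: cls_eq_iff)
    moreover have "(cls C a, cls C a) \<in> E" using eqE a by (auto simp: equiv_def refl_on_def intro: cls_in_quot)
    ultimately show "p \<in> spec_map A (cls C) E" using ab a by (simp add: spec_map_def)
  qed
  with prime show ?thesis by simp
qed

lemma sesq_basic:
  assumes "is_sesquiad A"
  shows "comm_monoid_zero A" "\<And>k a. S_sum A k a \<Longrightarrow> fin_comb (S_carrier A) k \<and> a \<in> S_carrier A"
  using assms unfolding is_sesquiad_def by blast+

definition pchar :: "'a sesquiad \<Rightarrow> ('a \<times> 'a) set \<Rightarrow> ('r, 'm) ring_scheme \<Rightarrow> ('a \<Rightarrow> 'r) \<Rightarrow> bool" where
  "pchar A C R \<psi> \<longleftrightarrow> char A R \<psi> \<and>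
     (\<forall>a\<in>S_carrier A. \<forall>b\<in>S_carrier A. \<psi> a = \<psi> b \<longleftrightarrow> (a, b) \<in> C) \<and>
     (\<forall>k a. S_sum A k a \<longrightarrow> lin R \<psi> k = \<psi> a)"

lemma pchar_sep: "pchar A C R \<psi> \<Longrightarrow> a \<in> S_carrier A \<Longrightarrow> b \<in> S_carrier A \<Longrightarrow> \<psi> a = \<psi> b \<longleftrightarrow> (a, b) \<in> C"
  by (simp add: pchar_def)
lemma pchar_char: "pchar A C R \<psi> \<Longrightarrow> char A R \<psi>"
  by (simp add: pchar_def)
lemma pchar_sum: "pchar A C R \<psi> \<Longrightarrow> S_sum A k a \<Longrightarrow> lin R \<psi> k = \<psi> a"
  by (simp add: pchar_def)

lemma cong_pchar:
  fixes A :: "'a sesquiad"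
  assumes fc: "\<And>k a. S_sum A k a \<Longrightarrow> fin_comb (S_carrier A) k \<and> a \<in> S_carrier A"
    and C: "is_congruence A C"
  shows "\<exists>(R :: ('a set \<Rightarrow> int) set ring) \<psi>. pchar A C R \<psi>"
  unfolding pchar_def by (rule cong_char[OF C fc])

lemma prime_chars:
  fixes A :: "'a sesquiad"
  assumes fc: "\<And>k a. S_sum A k a \<Longrightarrow> fin_comb (S_carrier A) k \<and> a \<in> S_carrier A"
  shows "\<exists>(Rf :: ('a \<times> 'a) set \<Rightarrow> ('a set \<Rightarrow> int) set ring) \<psi>f. \<forall>C\<in>spec_c A. pchar A C (Rf C) (\<psi>f C)"
proof -
  have "\<forall>C\<in>spec_c A. \<exists>p :: ('a set \<Rightarrow> int) set ring \<times> ('a \<Rightarrow> ('a set \<Rightarrow> int) set). pchar A C (fst p) (snd p)"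
  proof
    fix C assume "C \<in> spec_c A"
    hence "is_congruence A C" by (simp add: spec_c_def is_prime_congruence_def)
    from cong_pchar[OF fc this] obtain R :: "('a set \<Rightarrow> int) set ring" and \<psi> where "pchar A C R \<psi>" by blast
    hence "pchar A C (fst (R, \<psi>)) (snd (R, \<psi>))" by simp
    thus "\<exists>p :: ('a set \<Rightarrow> int) set ring \<times> ('a \<Rightarrow> ('a set \<Rightarrow> int) set). pchar A C (fst p) (snd p)" by (rule exI)
  qed
  from bchoice[OF this] obtain pf :: "('a \<times> 'a) set \<Rightarrow> ('a set \<Rightarrow> int) set ring \<times> ('a \<Rightarrow> ('a set \<Rightarrow> int) set)" where "\<forall>C\<in>spec_c A. pchar A C (fst (pf C)) (snd (pf C))" by blast
  thus ?thesis by (intro exI[of _ "\<lambda>C. fst (pf C)"] exI[of _ "\<lambda>C. snd (pf C)"])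
qed

lemma nil_congruence:
  fixes A :: "'a sesquiad"
  assumes A: "is_sesquiad A"
  shows "is_congruence A (Nil_cong A)"
proof -
  have S: "comm_monoid_zero A" by (rule sesq_basic(1)[OF A])
  have fc: "\<And>k a. S_sum A k a \<Longrightarrow> fin_comb (S_carrier A) k \<and> a \<in> S_carrier A" by (rule sesq_basic(2)[OF A])
  obtain Rf :: "('a \<times> 'a) set \<Rightarrow> ('a set \<Rightarrow> int) set ring" and \<psi>f where
    P0: "\<forall>C\<in>spec_c A. pchar A C (Rf C) (\<psi>f C)"
    using prime_chars[OF fc] by blast
  have Ps: "\<And>C a b. C \<in> spec_c A \<Longrightarrow> a \<in> S_carrier A \<Longrightarrow> b \<in> S_carrier A \<Longrightarrow> \<psi>f C a = \<psi>f C b \<longleftrightarrow> (a, b) \<in> C"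
    using P0 pchar_sep by metis
  have Neq: "Nil_cong A = {(a, b). a \<in> S_carrier A \<and> b \<in> S_carrier A \<and> (\<forall>C\<in>spec_c A. \<psi>f C a = \<psi>f C b)}"
  proof (rule Set.set_eqI)
    fix p :: "'a \<times> 'a"
    obtain a b where p: "p = (a, b)" by (cases p)
    show "p \<in> Nil_cong A \<longleftrightarrow> p \<in> {(a, b). a \<in> S_carrier A \<and> b \<in> S_carrier A \<and> (\<forall>C\<in>spec_c A. \<psi>f C a = \<psi>f C b)}"
    proof (cases "a \<in> S_carrier A \<and> b \<in> S_carrier A")
      case True thus ?thesis unfolding p Nil_cong_def using Ps by simp
    next
      case False thus ?thesis unfolding p Nil_cong_def by blast
    qed
  qed
  show ?thesis unfolding Neq
  proof (rule MC[where R=Rf and \<psi>=\<psi>f])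
    show "comm_monoid_zero A" by (rule S)
    show "\<And>C. C \<in> spec_c A \<Longrightarrow> char A (Rf C) (\<psi>f C)" using P0 pchar_char by metis
    thus "mcong A {(a, b). a \<in> S_carrier A \<and> b \<in> S_carrier A \<and> (\<forall>C\<in>spec_c A. \<psi>f C a = \<psi>f C b)}"
      by (rule ker_mcong[OF S])
  next
    fix k a assume sk: "S_sum A k a"
    have "\<forall>C\<in>spec_c A. lin (Rf C) (\<psi>f C) k = \<psi>f C a" using P0 pchar_sum[OF _ sk] by metis
    thus "fin_comb (S_carrier A) k \<and> a \<in> S_carrier A \<and> (\<forall>C\<in>spec_c A. lin (Rf C) (\<psi>f C) k = \<psi>f C a)"
      using fc[OF sk] by simp
  qed auto
qed


definition lift_cong :: "'a sesquiad \<Rightarrow> ('a \<times> 'a) set \<Rightarrow> ('a \<times> 'a) set \<Rightarrow> ('a set \<times> 'a set) set" where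
  "lift_cong A N C = {(X, Y). X \<in> S_carrier A // N \<and> Y \<in> S_carrier A // N \<and> ((SOME x. x \<in> X), (SOME y. y \<in> Y)) \<in> C}"

lemma rep_cls:
  assumes "equiv M N" "X \<in> M // N"
  shows "(SOME x. x \<in> X) \<in> M" "cls N (SOME x. x \<in> X) = X"
proof -
  obtain a where a: "a \<in> M" "X = cls N a" using assms(2) by (metis quot_repr)
  have "(a, SOME x. x \<in> cls N a) \<in> N" by (rule some_cls[OF assms(1) a(1)])
  thus "(SOME x. x \<in> X) \<in> M" using a assms(1) by (auto simp: equiv_def refl_on_def)
  have s: "((SOME x. x \<in> X), a) \<in> N" using \<open>(a, _) \<in> N\<close> a(2) assms(1) unfolding equiv_def sym_def by blast
  show "cls N (SOME x. x \<in> X) = X"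
    using a s assms(1) \<open>(SOME x. x \<in> X) \<in> M\<close> by (simp add: cls_eq_iff)
qed

lemma red_simps: "red A = quot_with A (Nil_cong A) (quot_sum A (Nil_cong A))"
  by (simp add: red_def quot_def)

lemma lift_prime:
  fixes A :: "'a sesquiad"
  assumes A: "is_sesquiad A" and Cs: "C \<in> spec_c A"
  shows "is_prime_congruence (red A) (lift_cong A (Nil_cong A) C)"
    and "spec_map A (cls (Nil_cong A)) (lift_cong A (Nil_cong A) C) = C"
proof -
  let ?N = "Nil_cong A"
  let ?M = "S_carrier A"
  have S: "comm_monoid_zero A" by (rule sesq_basic(1)[OF A])
  have fc: "\<And>k a. S_sum A k a \<Longrightarrow> fin_comb (S_carrier A) k \<and> a \<in> S_carrier A" by (rule sesq_basic(2)[OF A])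
  have NC: "is_congruence A ?N" by (rule nil_congruence[OF A])
  have mN: "mcong A ?N" using NC by (simp add: is_congruence_def mcong_def)
  have eqN: "equiv ?M ?N" using mN by (simp add: mcong_def)
  have CP: "is_prime_congruence A C" using Cs by (simp add: spec_c_def)
  have CC: "is_congruence A C" using CP by (simp add: is_prime_congruence_def)
  have eqC: "equiv ?M C" using CC by (simp add: is_congruence_def)
  have NsubC: "?N \<subseteq> C" using Cs by (auto simp: Nil_cong_def)
  obtain R :: "('a set \<Rightarrow> int) set ring" and \<psi> where pc: "pchar A C R \<psi>" using cong_pchar[OF fc CC] by blast
  have chA: "char A R \<psi>" by (rule pchar_char[OF pc])
  have sepC: "\<And>a b. a \<in> ?M \<Longrightarrow> b \<in> ?M \<Longrightarrow> \<psi> a = \<psi> b \<longleftrightarrow> (a, b) \<in> C" using pchar_sep[OF pc] by blast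
  have resp: "\<And>a b. (a, b) \<in> ?N \<Longrightarrow> \<psi> a = \<psi> b"
  proof -
    fix a b assume ab: "(a, b) \<in> ?N"
    hence "a \<in> ?M" "b \<in> ?M" by (auto simp: Nil_cong_def)
    thus "\<psi> a = \<psi> b" using sepC ab NsubC by blast
  qed
  define \<psi>' where "\<psi>' X = \<psi> (SOME x. x \<in> X)" for X
  have chQ: "char (red A) R \<psi>'"
    unfolding red_simps char_quot_with \<psi>'_def[abs_def] by (rule char_quot(1)[OF S mN chA resp])
  have cl: "\<And>a. a \<in> ?M \<Longrightarrow> \<psi>' (cls ?N a) = \<psi> a"
    unfolding \<psi>'_def by (rule char_quot(2)[OF S mN chA resp])
  have Sred: "comm_monoid_zero (red A)" unfolding red_simps by (rule quot_cmz[OF S mN])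
  have rc: "S_carrier (red A) = ?M // ?N" by (simp add: red_simps quot_with_def)
  have Leq: "lift_cong A ?N C = {(X, Y). X \<in> S_carrier (red A) \<and> Y \<in> S_carrier (red A) \<and> (\<forall>i\<in>(UNIV :: unit set). \<psi>' X = \<psi>' Y)}"
  proof (rule Set.set_eqI)
    fix p :: "'a set \<times> 'a set"
    obtain X Y where p: "p = (X, Y)" by (cases p)
    show "p \<in> lift_cong A ?N C \<longleftrightarrow> p \<in> {(X, Y). X \<in> S_carrier (red A) \<and> Y \<in> S_carrier (red A) \<and> (\<forall>i\<in>(UNIV :: unit set). \<psi>' X = \<psi>' Y)}"
    proof (cases "X \<in> ?M // ?N \<and> Y \<in> ?M // ?N")
      case True
      hence "(SOME x. x \<in> X) \<in> ?M" "(SOME x. x \<in> Y) \<in> ?M" using rep_cls[OF eqN] by auto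
      thus ?thesis unfolding p lift_cong_def rc \<psi>'_def using True sepC by simp
    next
      case False thus ?thesis unfolding p lift_cong_def rc by blast
    qed
  qed
  have cong: "is_congruence (red A) (lift_cong A ?N C)"
    unfolding Leq
  proof (rule MC[where R="\<lambda>_. R" and \<psi>="\<lambda>_. \<psi>'"])
    show "comm_monoid_zero (red A)" by (rule Sred)
    show "mcong (red A) {(X, Y). X \<in> S_carrier (red A) \<and> Y \<in> S_carrier (red A) \<and> (\<forall>i\<in>(UNIV :: unit set). \<psi>' X = \<psi>' Y)}"
      by (rule ker_mcong[OF Sred]) (rule chQ)
    show "\<And>i. i \<in> UNIV \<Longrightarrow> char (red A) R \<psi>'" by (rule chQ)
  next
    fix \<kappa> Y assume sk: "S_sum (red A) \<kappa> Y"
    hence qs: "quot_sum A ?N \<kappa> Y" by (simp add: red_simps quot_with_def)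
    have "lin R \<psi>' \<kappa> = \<psi>' Y" unfolding \<psi>'_def[abs_def]
      by (rule qsum_lin[OF S chA fc pchar_sum[OF pc] eqN resp qs])
    moreover have "fin_comb (S_carrier (red A)) \<kappa> \<and> Y \<in> S_carrier (red A)" using qs rc by (simp add: quot_sum_def)
    ultimately show "fin_comb (S_carrier (red A)) \<kappa> \<and> Y \<in> S_carrier (red A) \<and> (\<forall>i\<in>UNIV. lin R \<psi>' \<kappa> = \<psi>' Y)" by simp
  qed auto
  have Sc: "S_one A \<in> ?M" "S_zero A \<in> ?M" "\<And>x y. x \<in> ?M \<Longrightarrow> y \<in> ?M \<Longrightarrow> S_mult A x y \<in> ?M"
    using S by (auto simp: comm_monoid_zero_def)
  have rm: "\<And>a b. a \<in> ?M \<Longrightarrow> b \<in> ?M \<Longrightarrow> S_mult (red A) (cls ?N a) (cls ?N b) = cls ?N (S_mult A a b)"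
    unfolding red_simps by (rule quot_mult_cls[OF S mN])
  have ro: "S_one (red A) = cls ?N (S_one A)" "S_zero (red A) = cls ?N (S_zero A)"
    by (simp_all add: red_simps quot_with_def)
  have inL: "\<And>a b. a \<in> ?M \<Longrightarrow> b \<in> ?M \<Longrightarrow> (cls ?N a, cls ?N b) \<in> lift_cong A ?N C \<longleftrightarrow> (a, b) \<in> C"
    unfolding Leq rc using cl sepC by (auto intro: cls_in_quot)
  show "is_prime_congruence (red A) (lift_cong A ?N C)"
    unfolding is_prime_congruence_def
  proof (intro conjI ballI impI cong)
    show "(S_one (red A), S_zero (red A)) \<notin> lift_cong A ?N C"
      unfolding ro using inL[OF Sc(1,2)] CP by (simp add: is_prime_congruence_def)
  next
    fix X Y F assume X: "X \<in> S_carrier (red A)" and Y: "Y \<in> S_carrier (red A)" and F: "F \<in> S_carrier (red A)"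
      and m: "(S_mult (red A) X F, S_mult (red A) Y F) \<in> lift_cong A ?N C"
    obtain a b f where abf: "a \<in> ?M" "X = cls ?N a" "b \<in> ?M" "Y = cls ?N b" "f \<in> ?M" "F = cls ?N f"
      using X Y F rc by (metis quot_repr)
    have "(S_mult A a f, S_mult A b f) \<in> C" using m abf rm inL Sc by simp
    hence "(a, b) \<in> C \<or> (f, S_zero A) \<in> C" using CP abf unfolding is_prime_congruence_def by blast
    thus "(X, Y) \<in> lift_cong A ?N C \<or> (F, S_zero (red A)) \<in> lift_cong A ?N C"
      using inL abf Sc ro by simp
  qed
  show "spec_map A (cls ?N) (lift_cong A ?N C) = C"
  proof (rule Set.set_eqI)
    fix p :: "'a \<times> 'a"
    obtain a b where p: "p = (a, b)" by (cases p)
    show "p \<in> spec_map A (cls ?N) (lift_cong A ?N C) \<longleftrightarrow> p \<in> C"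
      unfolding p spec_map_def using inL eqC by (auto simp: equiv_def refl_on_def)
  qed
qed

lemma spec_top_topspace: "topspace (spec_top S) = spec_c S"
  unfolding spec_top_def topology_generated_by_topspace by (auto simp: D_open_def)

lemma spec_top_D_open: "a \<in> S_carrier S \<Longrightarrow> b \<in> S_carrier S \<Longrightarrow> openin (spec_top S) (D_open S a b)"
  unfolding spec_top_def by (rule topology_generated_by_Basis) blast

lemma prime_sub: "E \<in> spec_c S \<Longrightarrow> E \<subseteq> S_carrier S \<times> S_carrier S"
  by (auto simp: spec_c_def is_prime_congruence_def is_congruence_def equiv_def refl_on_def)

lemma prime_refl: "E \<in> spec_c S \<Longrightarrow> x \<in> S_carrier S \<Longrightarrow> (x, x) \<in> E"
  by (auto simp: spec_c_def is_prime_congruence_def is_congruence_def equiv_def refl_on_def)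

lemma reduced_red:
  fixes A :: "'a sesquiad"
  assumes A: "is_sesquiad A"
  shows "reduced (red A)"
proof -
  let ?N = "Nil_cong A" let ?M = "S_carrier A"
  have NC: "is_congruence A ?N" by (rule nil_congruence[OF A])
  have eqN: "equiv ?M ?N" using NC by (simp add: is_congruence_def)
  have rc: "S_carrier (red A) = ?M // ?N" by (simp add: red_simps quot_with_def)
  show ?thesis unfolding reduced_def
  proof (rule Set.set_eqI)
    fix p :: "'a set \<times> 'a set"
    obtain X Y where p: "p = (X, Y)" by (cases p)
    show "p \<in> Nil_cong (red A) \<longleftrightarrow> p \<in> Id_on (S_carrier (red A))"
    proof
      assume "p \<in> Nil_cong (red A)"
      hence XY: "X \<in> ?M // ?N" "Y \<in> ?M // ?N" and all: "\<forall>E\<in>spec_c (red A). (X, Y) \<in> E"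
        unfolding p Nil_cong_def rc by auto
      have "X = Y"
      proof (rule ccontr)
        assume ne: "X \<noteq> Y"
        let ?a = "SOME x. x \<in> X" let ?b = "SOME y. y \<in> Y"
        have ab: "?a \<in> ?M" "?b \<in> ?M" "cls ?N ?a = X" "cls ?N ?b = Y" using rep_cls[OF eqN] XY by auto
        have "(?a, ?b) \<notin> ?N" using cls_eq_iff[OF eqN ab(1,2)] ab(3,4) ne by simp
        then obtain C where C: "C \<in> spec_c A" "(?a, ?b) \<notin> C" using ab unfolding Nil_cong_def by blast
        have "lift_cong A ?N C \<in> spec_c (red A)" using lift_prime(1)[OF A C(1)] by (simp add: spec_c_def)
        hence "(X, Y) \<in> lift_cong A ?N C" using all by blast
        thus False using C(2) by (simp add: lift_cong_def)
      qed
      thus "p \<in> Id_on (S_carrier (red A))" using XY p rc by (simp add: Id_on_def)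
    next
      assume "p \<in> Id_on (S_carrier (red A))"
      hence "X = Y" "X \<in> S_carrier (red A)" using p by (auto simp: Id_on_def)
      thus "p \<in> Nil_cong (red A)" using p prime_refl by (auto simp: Nil_cong_def)
    qed
  qed
qed

lemma largest:
  fixes A :: "'a sesquiad"
  assumes A: "is_sesquiad A" and C: "is_congruence A C" and R: "reduced (quot A C)"
  shows "Nil_cong A \<subseteq> C"
proof
  fix p assume p: "p \<in> Nil_cong A"
  obtain a b where ab: "p = (a, b)" by (cases p)
  have S: "comm_monoid_zero A" by (rule sesq_basic(1)[OF A])
  have fc: "\<And>k a. S_sum A k a \<Longrightarrow> fin_comb (S_carrier A) k \<and> a \<in> S_carrier A" by (rule sesq_basic(2)[OF A])
  have eqC: "equiv (S_carrier A) C" using C by (simp add: is_congruence_def)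
  have a: "a \<in> S_carrier A" "b \<in> S_carrier A" using p ab by (auto simp: Nil_cong_def)
  have "\<forall>E\<in>spec_c (quot A C). (cls C a, cls C b) \<in> E"
  proof
    fix E assume E: "E \<in> spec_c (quot A C)"
    have "spec_map A (cls C) E \<in> spec_c A" using PB[OF S fc C] E by (simp add: spec_c_def)
    hence "(a, b) \<in> spec_map A (cls C) E" using p ab by (auto simp: Nil_cong_def)
    thus "(cls C a, cls C b) \<in> E" by (simp add: spec_map_def)
  qed
  moreover have "cls C a \<in> S_carrier (quot A C)" "cls C b \<in> S_carrier (quot A C)"
    using a by (auto simp: quot_simps intro: cls_in_quot)
  ultimately have "(cls C a, cls C b) \<in> Nil_cong (quot A C)" by (simp add: Nil_cong_def)
  hence "cls C a = cls C b" using R by (simp add: reduced_def Id_on_def)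
  thus "p \<in> C" using ab a eqC by (simp add: cls_eq_iff)
qed


lemma homeo:
  fixes A :: "'a sesquiad"
  assumes A: "is_sesquiad A"
  shows "homeomorphic_map (spec_top (red A)) (spec_top A) (spec_map A (cls (Nil_cong A)))"
proof -
  let ?N = "Nil_cong A" let ?M = "S_carrier A"
  let ?f = "spec_map A (cls ?N)" let ?g = "lift_cong A ?N"
  have S: "comm_monoid_zero A" by (rule sesq_basic(1)[OF A])
  have fc: "\<And>k a. S_sum A k a \<Longrightarrow> fin_comb (S_carrier A) k \<and> a \<in> S_carrier A" by (rule sesq_basic(2)[OF A])
  have NC: "is_congruence A ?N" by (rule nil_congruence[OF A])
  have eqN: "equiv ?M ?N" using NC by (simp add: is_congruence_def)
  have rc: "S_carrier (red A) = ?M // ?N" by (simp add: red_simps quot_with_def)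
  have fE: "\<And>E. E \<in> spec_c (red A) \<Longrightarrow> ?f E \<in> spec_c A"
    using PB[OF S fc NC] by (simp add: spec_c_def red_def)
  have gC: "\<And>C. C \<in> spec_c A \<Longrightarrow> ?g C \<in> spec_c (red A)"
    using lift_prime(1)[OF A] by (simp add: spec_c_def)
  have fg: "\<And>C. C \<in> spec_c A \<Longrightarrow> ?f (?g C) = C" using lift_prime(2)[OF A] by blast
  have gf: "\<And>E. E \<in> spec_c (red A) \<Longrightarrow> ?g (?f E) = E"
  proof -
    fix E assume E: "E \<in> spec_c (red A)"
    have Es: "E \<subseteq> (?M // ?N) \<times> (?M // ?N)" using prime_sub[OF E] rc by simp
    show "?g (?f E) = E"
    proof (rule Set.set_eqI)
      fix p :: "'a set \<times> 'a set"
      obtain X Y where p: "p = (X, Y)" by (cases p)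
      show "p \<in> ?g (?f E) \<longleftrightarrow> p \<in> E"
      proof (cases "X \<in> ?M // ?N \<and> Y \<in> ?M // ?N")
        case True
        hence "(SOME x. x \<in> X) \<in> ?M" "(SOME x. x \<in> Y) \<in> ?M"
          "cls ?N (SOME x. x \<in> X) = X" "cls ?N (SOME x. x \<in> Y) = Y" using rep_cls[OF eqN] by auto
        thus ?thesis unfolding p lift_cong_def spec_map_def using True by simp
      next
        case False thus ?thesis unfolding p lift_cong_def using Es by blast
      qed
    qed
  qed
  have contf: "continuous_map (spec_top (red A)) (spec_top A) ?f"
    unfolding spec_top_def[of A]
  proof (rule continuous_on_generated_topo)
    fix U assume U: "U \<in> insert (spec_c A) {D_open A a b | a b. a \<in> ?M \<and> b \<in> ?M}"
    show "openin (spec_top (red A)) (?f -` U \<inter> topspace (spec_top (red A)))"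
    proof (cases "U = spec_c A")
      case True
      hence "?f -` U \<inter> topspace (spec_top (red A)) = topspace (spec_top (red A))"
        using fE by (auto simp: spec_top_topspace)
      thus ?thesis by simp
    next
      case False
      then obtain a b where ab: "a \<in> ?M" "b \<in> ?M" "U = D_open A a b" using U by blast
      have "?f -` U \<inter> topspace (spec_top (red A)) = D_open (red A) (cls ?N a) (cls ?N b)"
        using ab fE by (auto simp: spec_top_topspace D_open_def spec_map_def)
      moreover have "cls ?N a \<in> S_carrier (red A)" "cls ?N b \<in> S_carrier (red A)"
        using ab rc by (auto intro: cls_in_quot)
      ultimately show ?thesis using spec_top_D_open by metis
    qed
  next
    show "?f ` topspace (spec_top (red A)) \<subseteq> \<Union> (insert (spec_c A) {D_open A a b | a b. a \<in> ?M \<and> b \<in> ?M})"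
      using fE by (auto simp: spec_top_topspace)
  qed
  have contg: "continuous_map (spec_top A) (spec_top (red A)) ?g"
    unfolding spec_top_def[of "red A"]
  proof (rule continuous_on_generated_topo)
    fix U assume U: "U \<in> insert (spec_c (red A)) {D_open (red A) a b | a b. a \<in> S_carrier (red A) \<and> b \<in> S_carrier (red A)}"
    show "openin (spec_top A) (?g -` U \<inter> topspace (spec_top A))"
    proof (cases "U = spec_c (red A)")
      case True
      hence "?g -` U \<inter> topspace (spec_top A) = topspace (spec_top A)"
        using gC by (auto simp: spec_top_topspace)
      thus ?thesis by simp
    next
      case False
      then obtain X Y where XY: "X \<in> ?M // ?N" "Y \<in> ?M // ?N" "U = D_open (red A) X Y" using U rc by blast
      have r: "(SOME x. x \<in> X) \<in> ?M" "(SOME x. x \<in> Y) \<in> ?M" using rep_cls[OF eqN] XY by auto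
      have "?g -` U \<inter> topspace (spec_top A) = D_open A (SOME x. x \<in> X) (SOME x. x \<in> Y)"
        using XY gC by (auto simp: spec_top_topspace D_open_def lift_cong_def)
      thus ?thesis using spec_top_D_open[OF r] by simp
    qed
  next
    show "?g ` topspace (spec_top A) \<subseteq> \<Union> (insert (spec_c (red A)) {D_open (red A) a b | a b. a \<in> S_carrier (red A) \<and> b \<in> S_carrier (red A)})"
      using gC by (auto simp: spec_top_topspace)
  qed
  have "homeomorphic_maps (spec_top (red A)) (spec_top A) ?f ?g"
    unfolding homeomorphic_maps_def using contf contg fg gf by (simp add: spec_top_topspace)
  thus ?thesis unfolding homeomorphic_map_maps by blast
qed

theorem lemma2p2p4:
  fixes A :: "'a sesquiad"
  assumes "is_sesquiad A"
  shows "is_congruence A (Nil_cong A)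
    \<and> reduced (red A)
    \<and> (\<forall>C. is_congruence A C \<and> reduced (quot A C) \<longrightarrow> Nil_cong A \<subseteq> C)
    \<and> homeomorphic_map (spec_top (red A)) (spec_top A) (spec_map A (cls (Nil_cong A)))"
  using nil_congruence[OF assms] reduced_red[OF assms] largest[OF assms] homeo[OF assms] by blast

end
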